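(* Let $p=p(n)$ satisfy $\frac{\log n+\omega(1)}{n}\le p\le \frac{1.1\log n}{n}$ (i.e. $np-\log n\to\infty$ and $p\le 1.1\log n/n$), and let $G\sim G(n,p)$. Then with probability tending to $1$ as $n\to\infty$, every vertex set $S\subseteq V(G)$ with $1\le |S|\le n/(\log n)^3$ satisfies $|E(S,\bar S)|\ge \delta(G)\,|S|$.
   Context: $G(n,p)$ is the Erdős–Rényi random graph on $n$ vertices in which each possible edge is present independently with probability $p$. $\delta(G)$ is the minimum degree of $G$. For $S\subseteq V(G)$, $\bar S=V(G)\setminus S$, and $E(S,\bar S)$ is the set of edges of $G$ with one endpoint in $S$ and the other in $\bar S$. $\log$ is the natural logarithm. *)

theory Defs
  imports Complex_Main
begin

text \<open>Graphs on vertex set {0..<n}: an edge set is a set of 2-element subsets of {0..<n}.\<close>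

definition all_edges :: "nat \<Rightarrow> nat set set" where
  "all_edges n = {e. \<exists>u v. u < n \<and> v < n \<and> u \<noteq> v \<and> e = {u, v}}"

definition gnp_prob :: "nat \<Rightarrow> real \<Rightarrow> (nat set set \<Rightarrow> bool) \<Rightarrow> real" where
  "gnp_prob n p P =
     (\<Sum>E\<in>{E. E \<subseteq> all_edges n \<and> P E}.
        p ^ card E * (1 - p) ^ (card (all_edges n) - card E))"

definition degree :: "nat set set \<Rightarrow> nat \<Rightarrow> nat" where
  "degree E v = card {e \<in> E. v \<in> e}"

definition min_degree :: "nat \<Rightarrow> nat set set \<Rightarrow> nat" where
  "min_degree n E = Min (degree E ` {0..<n})"

definition cut_edges :: "nat \<Rightarrow> nat set set \<Rightarrow> nat set \<Rightarrow> nat set set" where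
  "cut_edges n E S = {e \<in> E. \<exists>u w. u \<in> S \<and> w \<in> {0..<n} - S \<and> e = {u, w}}"

end

theory Submission
  imports Defs "HOL-Real_Asymp.Real_Asymp"
begin

definition wt :: "real \<Rightarrow> 'a set \<Rightarrow> 'a set \<Rightarrow> real" where
  "wt p A E = p ^ card E * (1 - p) ^ (card A - card E)"

definition G :: "real \<Rightarrow> 'a set \<Rightarrow> ('a set \<Rightarrow> bool) \<Rightarrow> real" where
  "G p A P = (\<Sum>E\<in>Pow A. if P E then wt p A E else 0)"

lemma finite_all_edges: "finite (all_edges n)"
proof -
  have "all_edges n \<subseteq> Pow {0..<n}" unfolding all_edges_def by auto
  then show ?thesis by (rule finite_subset) auto
qed

lemma gnp_prob_G: "gnp_prob n p P = G p (all_edges n) P"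
proof -
  have "{E. E \<subseteq> all_edges n \<and> P E} = {E \<in> Pow (all_edges n). P E}" by auto
  then show ?thesis unfolding gnp_prob_def G_def wt_def
    using sum.inter_filter[of "Pow (all_edges n)" "\<lambda>E. p ^ card E * (1 - p) ^ (card (all_edges n) - card E)" P]
    by (simp add: finite_all_edges)
qed

lemma wt_nonneg: "0 \<le> p \<Longrightarrow> p \<le> 1 \<Longrightarrow> 0 \<le> wt p A E"
  unfolding wt_def by simp

lemma G_nonneg: "0 \<le> p \<Longrightarrow> p \<le> 1 \<Longrightarrow> 0 \<le> G p A P"
  unfolding G_def by (intro sum_nonneg) (auto simp: wt_nonneg)

lemma G_total: assumes "finite A" shows "G p A (\<lambda>_. True) = 1"
proof -
  have "(\<Prod>x\<in>A. p + (1 - p)) = (\<Sum>X\<in>Pow A. (\<Prod>x\<in>X. p) * (\<Prod>x\<in>A-X. 1 - p))"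
    by (rule prod_add[OF assms])
  also have "\<dots> = (\<Sum>X\<in>Pow A. wt p A X)"
  proof (rule sum.cong)
    fix X assume "X \<in> Pow A"
    then have "card (A - X) = card A - card X" using assms by (auto intro: card_Diff_subset finite_subset)
    then show "(\<Prod>x\<in>X. p) * (\<Prod>x\<in>A-X. 1 - p) = wt p A X" by (simp add: wt_def)
  qed simp
  finally show ?thesis unfolding G_def by simp
qed

lemma sum_Pow_split:
  assumes "finite A" "F \<subseteq> A"
  shows "(\<Sum>E\<in>Pow A. f E) = (\<Sum>X\<in>Pow F. \<Sum>Y\<in>Pow (A - F). f (X \<union> Y))"
proof -
  have bij: "bij_betw (\<lambda>(X,Y). X \<union> Y) (Pow F \<times> Pow (A - F)) (Pow A)"
  proof (rule bij_betw_byWitness[where f' = "\<lambda>E. (E \<inter> F, E - F)"])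
    show "(\<lambda>(X, Y). X \<union> Y) ` (Pow F \<times> Pow (A - F)) \<subseteq> Pow A" using assms by auto
    show "(\<lambda>E. (E \<inter> F, E - F)) ` Pow A \<subseteq> Pow F \<times> Pow (A - F)" by auto
    show "\<forall>a\<in>Pow F \<times> Pow (A - F). (\<lambda>E. (E \<inter> F, E - F)) ((\<lambda>(X, Y). X \<union> Y) a) = a" by auto
    show "\<forall>a'\<in>Pow A. (\<lambda>(X, Y). X \<union> Y) ((\<lambda>E. (E \<inter> F, E - F)) a') = a'" by auto
  qed
  have "(\<Sum>E\<in>Pow A. f E) = (\<Sum>Z\<in>Pow F \<times> Pow (A - F). f ((\<lambda>(X,Y). X \<union> Y) Z))"
    using sum.reindex_bij_betw[OF bij, of f] by simp
  also have "\<dots> = (\<Sum>(X,Y)\<in>Pow F \<times> Pow (A - F). f (X \<union> Y))"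
    by (rule sum.cong) auto
  also have "\<dots> = (\<Sum>X\<in>Pow F. \<Sum>Y\<in>Pow (A - F). f (X \<union> Y))"
    by (subst sum.cartesian_product) simp
  finally show ?thesis .
qed

lemma wt_split:
  assumes "finite A" "F \<subseteq> A" "X \<subseteq> F" "Y \<subseteq> A - F"
  shows "wt p A (X \<union> Y) = wt p F X * wt p (A - F) Y"
proof -
  have fF: "finite F" using assms(1,2) finite_subset by blast
  have fX: "finite X" "finite Y" using assms(1,3,4) fF by (auto intro: rev_finite_subset)
  have disj: "X \<inter> Y = {}" using assms by auto
  have c1: "card (X \<union> Y) = card X + card Y" using card_Un_disjoint[OF fX disj] .
  have cA: "card A = card F + card (A - F)" using assms card_Diff_subset[OF fF assms(2)]
    card_mono[OF assms(1,2)] by simp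
  have "card X \<le> card F" using card_mono[OF fF assms(3)] .
  moreover have "card Y \<le> card (A - F)" using card_mono[OF _ assms(4)] assms by simp
  ultimately have "card A - card (X \<union> Y) = (card F - card X) + (card (A - F) - card Y)"
    using c1 cA by simp
  then show ?thesis unfolding wt_def using c1 by (simp add: power_add)
qed

lemma G_split:
  assumes "finite A" "F \<subseteq> A"
  shows "G p A (\<lambda>E. P1 (E \<inter> F) \<and> P2 (E - F)) = G p F P1 * G p (A - F) P2"
proof -
  have "G p A (\<lambda>E. P1 (E \<inter> F) \<and> P2 (E - F)) =
     (\<Sum>X\<in>Pow F. \<Sum>Y\<in>Pow (A - F). (if P1 X then wt p F X else 0) * (if P2 Y then wt p (A - F) Y else 0))"
    unfolding G_def
  proof (subst sum_Pow_split[OF assms], intro sum.cong refl)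
    fix X Y assume XY: "X \<in> Pow F" "Y \<in> Pow (A - F)"
    then have "(X \<union> Y) \<inter> F = X" "(X \<union> Y) - F = Y" by auto
    then show "(if P1 ((X \<union> Y) \<inter> F) \<and> P2 (X \<union> Y - F) then wt p A (X \<union> Y) else 0) =
         (if P1 X then wt p F X else 0) * (if P2 Y then wt p (A - F) Y else 0)"
      using wt_split[OF assms, of X Y p] XY by auto
  qed
  also have "\<dots> = G p F P1 * G p (A - F) P2"
    unfolding G_def by (simp add: sum_product)
  finally show ?thesis .
qed

lemma G_mono:
  assumes "0 \<le> p" "p \<le> 1" "\<And>E. E \<subseteq> A \<Longrightarrow> P E \<Longrightarrow> Q E"
  shows "G p A P \<le> G p A Q"
  unfolding G_def using assms by (intro sum_mono) (auto simp: wt_nonneg)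

lemma G_compl:
  assumes "finite A"
  shows "G p A P = 1 - G p A (\<lambda>E. \<not> P E)"
proof -
  have "G p A P + G p A (\<lambda>E. \<not> P E) = G p A (\<lambda>_. True)"
    unfolding G_def sum.distrib[symmetric] by (intro sum.cong) auto
  then show ?thesis using G_total[OF assms] by simp
qed

lemma G_union_bound:
  assumes "0 \<le> p" "p \<le> 1" "finite I"
  shows "G p A (\<lambda>E. \<exists>i\<in>I. P i E) \<le> (\<Sum>i\<in>I. G p A (P i))"
proof -
  have "G p A (\<lambda>E. \<exists>i\<in>I. P i E) \<le> (\<Sum>E\<in>Pow A. \<Sum>i\<in>I. if P i E then wt p A E else 0)"
    unfolding G_def
  proof (intro sum_mono)
    fix E
    show "(if \<exists>i\<in>I. P i E then wt p A E else 0) \<le> (\<Sum>i\<in>I. if P i E then wt p A E else 0)"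
    proof (cases "\<exists>i\<in>I. P i E")
      case True
      then obtain i where i: "i \<in> I" "P i E" by auto
      have "(\<Sum>i\<in>{i}. if P i E then wt p A E else 0) \<le> (\<Sum>i\<in>I. if P i E then wt p A E else 0)"
        using i assms by (intro sum_mono2) (auto simp: wt_nonneg)
      then show ?thesis using True i by simp
    next
      case False
      then show ?thesis using assms by (auto intro!: sum_nonneg simp: wt_nonneg)
    qed
  qed
  also have "\<dots> = (\<Sum>i\<in>I. G p A (P i))" unfolding G_def by (rule sum.swap)
  finally show ?thesis .
qed

lemma G_family:
  assumes "finite \<F>"
  shows "finite A \<Longrightarrow> (\<forall>F\<in>\<F>. F \<subseteq> A) \<Longrightarrow> (\<forall>F1\<in>\<F>. \<forall>F2\<in>\<F>. F1 \<noteq> F2 \<longrightarrow> F1 \<inter> F2 = {}) \<Longrightarrow>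
     G p A (\<lambda>E. \<forall>F\<in>\<F>. Q F (E \<inter> F)) = (\<Prod>F\<in>\<F>. G p F (Q F))"
  using assms
proof (induction \<F> arbitrary: A rule: finite_induct)
  case empty
  then show ?case using G_total by simp
next
  case (insert F0 \<F>)
  have sub: "F0 \<subseteq> A" using insert by auto
  have dj: "\<And>F. F \<in> \<F> \<Longrightarrow> F \<inter> F0 = {}"
  proof -
    fix F assume F: "F \<in> \<F>"
    then have "F \<noteq> F0" using insert.hyps(2) by auto
    moreover have "F \<in> insert F0 \<F>" "F0 \<in> insert F0 \<F>" using F by auto
    ultimately show "F \<inter> F0 = {}" using insert.prems(2) by (meson insert.prems(3))
  qed
  have eq: "\<And>E. (\<forall>F\<in>insert F0 \<F>. Q F (E \<inter> F)) = (Q F0 (E \<inter> F0) \<and> (\<forall>F\<in>\<F>. Q F ((E - F0) \<inter> F)))"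
  proof -
    fix E
    have "\<And>F. F \<in> \<F> \<Longrightarrow> (E - F0) \<inter> F = E \<inter> F"
      using dj by blast
    then show "?thesis E" by auto
  qed
  have "G p A (\<lambda>E. \<forall>F\<in>insert F0 \<F>. Q F (E \<inter> F)) =
        G p A (\<lambda>E. Q F0 (E \<inter> F0) \<and> (\<lambda>Y. \<forall>F\<in>\<F>. Q F (Y \<inter> F)) (E - F0))"
    by (simp only: eq)
  also have "\<dots> = G p F0 (Q F0) * G p (A - F0) (\<lambda>Y. \<forall>F\<in>\<F>. Q F (Y \<inter> F))"
    by (rule G_split[OF insert.prems(1) sub])
  also have "G p (A - F0) (\<lambda>Y. \<forall>F\<in>\<F>. Q F (Y \<inter> F)) = (\<Prod>F\<in>\<F>. G p F (Q F))"
  proof (rule insert.IH)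
    show "finite (A - F0)" using insert by auto
    show "\<forall>F\<in>\<F>. F \<subseteq> A - F0" using insert.prems(2) dj by blast
    show "\<forall>F1\<in>\<F>. \<forall>F2\<in>\<F>. F1 \<noteq> F2 \<longrightarrow> F1 \<inter> F2 = {}" using insert.prems(3) by simp
  qed
  finally show ?case using insert.hyps by simp
qed

lemma G_subset_event:
  assumes "finite A" "F \<subseteq> A"
  shows "G p A (\<lambda>E. F \<subseteq> E) = p ^ card F"
proof -
  have "G p A (\<lambda>E. F \<subseteq> E) = G p A (\<lambda>E. (\<lambda>X. X = F) (E \<inter> F) \<and> (\<lambda>_. True) (E - F))"
    by (rule arg_cong[where f = "G p A"]) auto
  also have "\<dots> = G p F (\<lambda>X. X = F) * G p (A - F) (\<lambda>_. True)"
    by (rule G_split[OF assms])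
  also have "G p (A - F) (\<lambda>_. True) = 1" using assms by (intro G_total) auto
  also have "G p F (\<lambda>X. X = F) = wt p F F"
    unfolding G_def using assms(1,2) finite_subset[OF assms(2,1)] by simp
  finally show ?thesis by (simp add: wt_def)
qed

definition bt :: "nat \<Rightarrow> real \<Rightarrow> nat \<Rightarrow> real" where
  "bt N p T = (\<Sum>i\<le>T. real (N choose i) * p ^ i * (1 - p) ^ (N - i))"

lemma G_card_le:
  assumes "finite F"
  shows "G p F (\<lambda>X. card X \<le> T) = bt (card F) p T"
proof -
  have "G p F (\<lambda>X. card X \<le> T) = (\<Sum>X\<in>{X\<in>Pow F. card X \<le> T}. wt p F X)"
    unfolding G_def by (rule sum.inter_filter[symmetric]) (simp add: assms)
  also have "{X\<in>Pow F. card X \<le> T} = (\<Union>i\<in>{..T}. {X. X \<subseteq> F \<and> card X = i})" by auto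
  also have "(\<Sum>X\<in>(\<Union>i\<in>{..T}. {X. X \<subseteq> F \<and> card X = i}). wt p F X) =
      (\<Sum>i\<le>T. \<Sum>X\<in>{X. X \<subseteq> F \<and> card X = i}. wt p F X)"
    by (rule sum.UNION_disjoint) (auto simp: assms)
  also have "\<dots> = (\<Sum>i\<le>T. real (card F choose i) * p ^ i * (1 - p) ^ (card F - i))"
  proof (rule sum.cong[OF refl])
    fix i
    have "(\<Sum>X\<in>{X. X \<subseteq> F \<and> card X = i}. wt p F X) = (\<Sum>X\<in>{X. X \<subseteq> F \<and> card X = i}. p ^ i * (1 - p) ^ (card F - i))"
      by (rule sum.cong) (auto simp: wt_def)
    also have "\<dots> = real (card F choose i) * (p ^ i * (1 - p) ^ (card F - i))"
      using n_subsets[OF assms, of i] by simp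
    finally show "(\<Sum>X\<in>{X. X \<subseteq> F \<and> card X = i}. wt p F X) = real (card F choose i) * p ^ i * (1 - p) ^ (card F - i)"
      by simp
  qed
  finally show ?thesis unfolding bt_def .
qed


definition nb :: "nat \<Rightarrow> nat set set \<Rightarrow> nat \<Rightarrow> nat set" where
  "nb n E v = {w. w < n \<and> {v, w} \<in> E}"

lemma all_edges_mem: "e \<in> all_edges n \<longleftrightarrow> (\<exists>u v. u < n \<and> v < n \<and> u \<noteq> v \<and> e = {u, v})"
  unfolding all_edges_def by simp

lemma degree_nb:
  assumes E: "E \<subseteq> all_edges n"
  shows "degree E v = card (nb n E v)"
proof -
  have eq: "{e \<in> E. v \<in> e} = (\<lambda>w. {v, w}) ` nb n E v"
  proof
    show "{e \<in> E. v \<in> e} \<subseteq> (\<lambda>w. {v, w}) ` nb n E v"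
    proof
      fix e assume "e \<in> {e \<in> E. v \<in> e}"
      then have e: "e \<in> E" "v \<in> e" by auto
      then obtain a b where ab: "a < n" "b < n" "a \<noteq> b" "e = {a, b}" using E all_edges_mem by blast
      show "e \<in> (\<lambda>w. {v, w}) ` nb n E v"
      proof (cases "v = a")
        case True
        then show ?thesis using ab e unfolding nb_def by auto
      next
        case False
        then have "v = b" using ab e by auto
        then have "e = {v, a}" "{v, a} \<in> E" using ab e by (auto simp: insert_commute)
        then show ?thesis using ab unfolding nb_def by (auto intro!: image_eqI[where x = a])
      qed
    qed
  qed (auto simp: nb_def)
  have inj: "inj_on (\<lambda>w. {v, w}) (nb n E v)"
    by (rule inj_onI) (auto simp: doubleton_eq_iff)
  show ?thesis unfolding degree_def eq using card_image[OF inj] by simp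
qed

lemma finite_nb: "finite (nb n E v)" unfolding nb_def by auto

lemma nb_sym: "w \<in> nb n E v \<Longrightarrow> v < n \<Longrightarrow> v \<in> nb n E w"
  unfolding nb_def by (auto simp: insert_commute)

lemma cut_card:
  assumes E: "E \<subseteq> all_edges n" and S: "S \<subseteq> {0..<n}"
  shows "card (cut_edges n E S) = (\<Sum>v\<in>S. card (nb n E v - S))"
proof -
  have fS: "finite S" using S finite_subset by blast
  have eq: "cut_edges n E S = (\<Union>v\<in>S. (\<lambda>w. {v, w}) ` (nb n E v - S))"
    unfolding cut_edges_def nb_def by auto
  have "card (\<Union>v\<in>S. (\<lambda>w. {v, w}) ` (nb n E v - S)) = (\<Sum>v\<in>S. card ((\<lambda>w. {v, w}) ` (nb n E v - S)))"
  proof (rule card_UN_disjoint[OF fS])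
    show "\<forall>i\<in>S. finite ((\<lambda>w. {i, w}) ` (nb n E i - S))" using finite_nb by auto
    show "\<forall>i\<in>S. \<forall>j\<in>S. i \<noteq> j \<longrightarrow> (\<lambda>w. {i, w}) ` (nb n E i - S) \<inter> (\<lambda>w. {j, w}) ` (nb n E j - S) = {}"
      by (auto simp: doubleton_eq_iff)
  qed
  also have "\<dots> = (\<Sum>v\<in>S. card (nb n E v - S))"
  proof (rule sum.cong[OF refl])
    fix v
    have inj: "inj_on (\<lambda>w. {v, w}) (nb n E v - S)"
      by (rule inj_onI) (auto simp: doubleton_eq_iff)
    show "card ((\<lambda>w. {v, w}) ` (nb n E v - S)) = card (nb n E v - S)" using card_image[OF inj] .
  qed
  finally show ?thesis using eq by simp
qed

lemma card_filter_sum: "finite Y \<Longrightarrow> card {w \<in> Y. P w} = (\<Sum>w\<in>Y. if P w then 1 else 0)"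
  by (simp add: sum.inter_filter[symmetric])

lemma nb_inter_card:
  assumes "Y \<subseteq> {0..<n}"
  shows "card (nb n E v \<inter> Y) = (\<Sum>w\<in>Y. if {v, w} \<in> E then 1 else 0)"
proof -
  have fY: "finite Y" using assms finite_subset by blast
  have "nb n E v \<inter> Y = {w \<in> Y. {v, w} \<in> E}" using assms unfolding nb_def by auto
  then show ?thesis using card_filter_sum[OF fY] by simp
qed

lemma double_count:
  assumes "X \<subseteq> {0..<n}" "Y \<subseteq> {0..<n}"
  shows "(\<Sum>v\<in>X. card (nb n E v \<inter> Y)) = (\<Sum>w\<in>Y. card (nb n E w \<inter> X))"
proof -
  have fX: "finite X" "finite Y" using assms finite_subset by blast+
  have "(\<Sum>v\<in>X. card (nb n E v \<inter> Y)) = (\<Sum>v\<in>X. \<Sum>w\<in>Y. if {v, w} \<in> E then 1 else 0)"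
    using nb_inter_card[OF assms(2)] by simp
  also have "\<dots> = (\<Sum>w\<in>Y. \<Sum>v\<in>X. if {v, w} \<in> E then 1 else 0)" by (rule sum.swap)
  also have "\<dots> = (\<Sum>w\<in>Y. \<Sum>v\<in>X. if {w, v} \<in> E then 1 else 0)" by (simp add: insert_commute)
  also have "\<dots> = (\<Sum>w\<in>Y. card (nb n E w \<inter> X))"
    using nb_inter_card[OF assms(1)] by simp
  finally show ?thesis .
qed

lemma card_le_2_fibers:
  assumes fA: "finite A" and fB: "finite B" and f: "\<And>a. a \<in> A \<Longrightarrow> f a \<in> B"
    and fib: "\<And>b. b \<in> B \<Longrightarrow> card {a \<in> A. f a = b} \<le> 2"
  shows "card A \<le> 2 * card B"
proof -
  have "A = (\<Union>b\<in>B. {a \<in> A. f a = b})" using f by auto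
  then have "card A \<le> (\<Sum>b\<in>B. card {a \<in> A. f a = b})" using card_UN_le[OF fB] by metis
  also have "\<dots> \<le> (\<Sum>b\<in>B. 2)" using fib by (intro sum_mono) auto
  finally show ?thesis by simp
qed

lemma pairs_le_edges:
  assumes E: "E \<subseteq> all_edges n" and H: "H \<subseteq> {0..<n}"
  shows "(\<Sum>v\<in>H. card (nb n E v \<inter> H)) \<le> 2 * card {e \<in> E. e \<subseteq> H}"
proof -
  have fH: "finite H" using H finite_subset by blast
  have fE: "finite E"
  proof -
    have "all_edges n \<subseteq> Pow {0..<n}" unfolding all_edges_def by auto
    then show ?thesis using E by (meson finite_Pow_iff finite_atLeastLessThan finite_subset)
  qed
  let ?A = "Sigma H (\<lambda>v. nb n E v \<inter> H)"
  have eq1: "(\<Sum>v\<in>H. card (nb n E v \<inter> H)) = card ?A"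
    using fH by (simp add: finite_nb)
  define f :: "nat \<times> nat \<Rightarrow> nat set" where "f = (\<lambda>(v,w). {v, w})"
  define B where "B = {e \<in> E. e \<subseteq> H}"
  have fA: "finite ?A" using fH finite_nb by (intro finite_SigmaI) auto
  have fB: "finite B" using fE unfolding B_def by auto
  have fAB: "\<And>a. a \<in> ?A \<Longrightarrow> f a \<in> B"
  proof -
    fix a assume "a \<in> ?A"
    then obtain v w where "a = (v, w)" "v \<in> H" "w \<in> H" "{v, w} \<in> E" unfolding nb_def by blast
    then show "f a \<in> B" unfolding f_def B_def by simp
  qed
  have fib: "\<And>b. b \<in> B \<Longrightarrow> card {a \<in> ?A. f a = b} \<le> 2"
  proof -
    fix b assume "b \<in> B"
    then have "b \<in> all_edges n" using E unfolding B_def by blast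
    then obtain x y where b: "b = {x, y}" unfolding all_edges_mem by blast
    have "{a \<in> ?A. f a = b} \<subseteq> {(x, y), (y, x)}"
    proof
      fix a assume a: "a \<in> {a \<in> ?A. f a = b}"
      obtain v w where vw: "a = (v, w)" by (cases a) blast
      then have "{v, w} = {x, y}" using a b unfolding f_def by simp
      then have "(v = x \<and> w = y) \<or> (v = y \<and> w = x)" by (simp add: doubleton_eq_iff)
      then show "a \<in> {(x, y), (y, x)}" using vw by auto
    qed
    then have "card {a \<in> ?A. f a = b} \<le> card {(x, y), (y, x)}"
      by (rule card_mono[rotated]) simp
    also have "\<dots> \<le> 2" by (rule card_insert_le_m1) (simp_all only: card.insert card.empty finite.emptyI empty_iff, simp_all)
    finally show "card {a \<in> ?A. f a = b} \<le> 2" .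
  qed
  have "card ?A \<le> 2 * card B" by (rule card_le_2_fibers[OF fA fB fAB fib])
  then show ?thesis unfolding B_def eq1 .
qed


lemma min_degree_le:
  assumes "v < n" shows "min_degree n E \<le> degree E v"
  unfolding min_degree_def using assms by (intro Min_le) auto

lemma det_main:
  assumes E: "E \<subseteq> all_edges n"
    and HA: "\<forall>H \<subseteq> {0..<n}. real (card H) \<le> smax \<longrightarrow> card {e \<in> E. e \<subseteq> H} \<le> 2 * card H"
    and HB1: "\<forall>u<n. \<forall>v<n. {u, v} \<in> E \<longrightarrow> degree E u \<le> T \<longrightarrow> degree E v \<le> T \<longrightarrow> False"
    and HB2: "\<forall>w<n. \<forall>u<n. \<forall>v<n. u \<noteq> v \<longrightarrow> {u, w} \<in> E \<longrightarrow> {v, w} \<in> E \<longrightarrow> degree E u \<le> T \<longrightarrow> degree E v \<le> T \<longrightarrow> False"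
    and HC: "min_degree n E + 5 \<le> T"
    and S: "S \<subseteq> {0..<n}" "real (card S) \<le> smax"
  shows "min_degree n E * card S \<le> card (cut_edges n E S)"
proof -
  define \<delta> where "\<delta> = min_degree n E"
  define d where "d = (\<lambda>v. card (nb n E v))"
  have dd: "\<And>v. degree E v = d v" unfolding d_def using degree_nb[OF E] by simp
  have dge: "\<And>v. v \<in> S \<Longrightarrow> \<delta> \<le> d v"
  proof -
    fix v assume "v \<in> S"
    then have "v < n" using S by auto
    then show "\<delta> \<le> d v" using min_degree_le[of v n E] dd[of v] unfolding \<delta>_def by simp
  qed
  define Lw where "Lw = {v \<in> S. d v < \<delta> + 6}"
  define H where "H = S - Lw"
  have fS: "finite S" using S finite_subset by blast
  have SHL: "S = H \<union> Lw" "H \<inter> Lw = {}" "Lw \<subseteq> S" "H \<subseteq> S" unfolding H_def Lw_def by auto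
  have fHL: "finite H" "finite Lw" using SHL fS finite_subset by metis+
  have Hn: "H \<subseteq> {0..<n}" "Lw \<subseteq> {0..<n}" using SHL S by auto
  have LwT: "\<And>v. v \<in> Lw \<Longrightarrow> d v \<le> T" unfolding Lw_def using HC \<delta>_def by auto
  have Hge: "\<And>v. v \<in> H \<Longrightarrow> \<delta> + 6 \<le> d v" unfolding H_def Lw_def by auto
  have split: "\<And>v. d v = card (nb n E v - S) + card (nb n E v \<inter> S)"
  proof -
    fix v
    have "nb n E v = (nb n E v - S) \<union> (nb n E v \<inter> S)" by auto
    moreover have "card ((nb n E v - S) \<union> (nb n E v \<inter> S)) = card (nb n E v - S) + card (nb n E v \<inter> S)"
      by (rule card_Un_disjoint) (auto simp: finite_nb)
    ultimately show "d v = card (nb n E v - S) + card (nb n E v \<inter> S)" unfolding d_def by metis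
  qed
  have s1: "(\<Sum>v\<in>S. d v) = card (cut_edges n E S) + (\<Sum>v\<in>S. card (nb n E v \<inter> S))"
    using cut_card[OF E S(1)] split by (simp add: sum.distrib)
  have s2: "\<delta> * card S + 6 * card H \<le> (\<Sum>v\<in>S. d v)"
  proof -
    have "(\<Sum>v\<in>S. d v) = (\<Sum>v\<in>H. d v) + (\<Sum>v\<in>Lw. d v)"
      using SHL fHL by (simp add: sum.union_disjoint)
    moreover have "(\<Sum>v\<in>H. \<delta> + 6) \<le> (\<Sum>v\<in>H. d v)" using Hge by (intro sum_mono) auto
    moreover have "(\<Sum>v\<in>Lw. \<delta>) \<le> (\<Sum>v\<in>Lw. d v)" using dge SHL by (intro sum_mono) auto
    moreover have "card S = card H + card Lw" using SHL fHL card_Un_disjoint by metis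
    ultimately show ?thesis by (simp add: algebra_simps)
  qed
  have LwH: "\<And>v. v \<in> Lw \<Longrightarrow> nb n E v \<inter> S = nb n E v \<inter> H"
  proof -
    fix v assume v: "v \<in> Lw"
    have "nb n E v \<inter> Lw = {}"
    proof (rule ccontr)
      assume "nb n E v \<inter> Lw \<noteq> {}"
      then obtain w where w: "w \<in> nb n E v" "w \<in> Lw" by auto
      then have "{v, w} \<in> E" "w < n" unfolding nb_def by auto
      moreover have "v < n" using v Hn by auto
      ultimately show False using HB1 LwT[OF v] LwT[OF w(2)] dd by metis
    qed
    then show "nb n E v \<inter> S = nb n E v \<inter> H" using SHL by auto
  qed
  have HLw1: "\<And>v. v \<in> H \<Longrightarrow> card (nb n E v \<inter> Lw) \<le> 1"
  proof -
    fix v assume v: "v \<in> H"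
    have "\<forall>a\<in>nb n E v \<inter> Lw. \<forall>b\<in>nb n E v \<inter> Lw. a = b"
    proof (intro ballI, rule ccontr)
      fix a b assume a: "a \<in> nb n E v \<inter> Lw" and b: "b \<in> nb n E v \<inter> Lw" and ab: "a \<noteq> b"
      have "{a, v} \<in> E" "{b, v} \<in> E" using a b unfolding nb_def by (auto simp: insert_commute)
      moreover have "a < n" "b < n" "v < n" using a b v Hn by auto
      moreover have "degree E a \<le> T" "degree E b \<le> T" using LwT a b dd by auto
      ultimately show False using HB2 ab by metis
    qed
    then show "card (nb n E v \<inter> Lw) \<le> 1"
      using card_le_Suc0_iff_eq[of "nb n E v \<inter> Lw"] finite_nb by auto
  qed
  have HS: "\<And>v. v \<in> H \<Longrightarrow> card (nb n E v \<inter> S) = card (nb n E v \<inter> H) + card (nb n E v \<inter> Lw)"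
  proof -
    fix v assume "v \<in> H"
    have "nb n E v \<inter> S = (nb n E v \<inter> H) \<union> (nb n E v \<inter> Lw)" using SHL by auto
    moreover have "card ((nb n E v \<inter> H) \<union> (nb n E v \<inter> Lw)) = card (nb n E v \<inter> H) + card (nb n E v \<inter> Lw)"
      by (rule card_Un_disjoint) (use SHL finite_nb in auto)
    ultimately show "card (nb n E v \<inter> S) = card (nb n E v \<inter> H) + card (nb n E v \<inter> Lw)" by metis
  qed
  have s3: "(\<Sum>v\<in>S. card (nb n E v \<inter> S)) \<le> 6 * card H"
  proof -
    have "(\<Sum>v\<in>S. card (nb n E v \<inter> S)) = (\<Sum>v\<in>H. card (nb n E v \<inter> S)) + (\<Sum>v\<in>Lw. card (nb n E v \<inter> S))"
      using SHL fHL by (simp add: sum.union_disjoint)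
    also have "(\<Sum>v\<in>Lw. card (nb n E v \<inter> S)) = (\<Sum>v\<in>Lw. card (nb n E v \<inter> H))"
      using LwH by simp
    also have "\<dots> = (\<Sum>v\<in>H. card (nb n E v \<inter> Lw))" by (rule double_count[OF Hn(2) Hn(1)])
    also have "(\<Sum>v\<in>H. card (nb n E v \<inter> S)) = (\<Sum>v\<in>H. card (nb n E v \<inter> H)) + (\<Sum>v\<in>H. card (nb n E v \<inter> Lw))"
      using HS by (simp add: sum.distrib)
    finally have eq: "(\<Sum>v\<in>S. card (nb n E v \<inter> S)) = (\<Sum>v\<in>H. card (nb n E v \<inter> H)) + 2 * (\<Sum>v\<in>H. card (nb n E v \<inter> Lw))"
      by simp
    have "(\<Sum>v\<in>H. card (nb n E v \<inter> Lw)) \<le> (\<Sum>v\<in>H. 1)" using HLw1 by (intro sum_mono) auto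
    then have a: "(\<Sum>v\<in>H. card (nb n E v \<inter> Lw)) \<le> card H" by simp
    have "real (card H) \<le> real (card S)" using card_mono[OF fS SHL(4)] by simp
    then have "card {e \<in> E. e \<subseteq> H} \<le> 2 * card H" using HA Hn S by auto
    then have b: "(\<Sum>v\<in>H. card (nb n E v \<inter> H)) \<le> 4 * card H" using pairs_le_edges[OF E Hn(1)] by simp
    show ?thesis using eq a b by simp
  qed
  show ?thesis using s1 s2 s3 unfolding \<delta>_def by simp
qed


lemma exp_partial_le:
  fixes x :: real assumes "0 \<le> x"
  shows "(\<Sum>i\<le>T. x ^ i / fact i) \<le> exp x"
proof -
  have s: "(\<lambda>n. x ^ n / fact n) sums exp x"
    using exp_converges[of x] by (simp add: divide_inverse mult.commute)
  have "(\<Sum>i\<le>T. x ^ i / fact i) \<le> suminf (\<lambda>n. x ^ n / fact n)"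
    by (rule sum_le_suminf[OF sums_summable[OF s]]) (use assms in auto)
  also have "\<dots> = exp x" using sums_unique[OF s] by simp
  finally show ?thesis .
qed

lemma pow_fact_le_exp:
  fixes x :: real assumes "0 \<le> x"
  shows "x ^ m / fact m \<le> exp x"
proof -
  have "x ^ m / fact m \<le> (\<Sum>i\<le>m. x ^ i / fact i)"
    using assms by (intro member_le_sum) auto
  then show ?thesis using exp_partial_le[OF assms, of m] by linarith
qed

lemma choose_le_pow_fact: "real (N choose i) \<le> real N ^ i / fact i"
proof -
  have "(N choose i) * fact i \<le> N ^ i" by (rule binomial_fact_pow)
  then have "real (N choose i) * fact i \<le> real N ^ i"
    by (metis of_nat_fact of_nat_le_iff of_nat_mult of_nat_power)
  then show ?thesis by (simp add: field_simps)
qed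

lemma fact_ge_pow_exp: "real m ^ m / exp (real m) \<le> fact m"
proof -
  have "real m ^ m / fact m \<le> exp (real m)" by (rule pow_fact_le_exp) simp
  then show ?thesis by (simp add: field_simps)
qed

lemma bt_upper:
  assumes p: "0 \<le> p" "p \<le> 1" and T: "T \<le> N"
  shows "bt N p T \<le> exp (2 * real T) * exp (p * T - (1 - exp (-2)) * N * p)"
proof -
  define \<theta> where "\<theta> = exp (-2::real)"
  have th: "0 < \<theta>" "\<theta> \<le> 1" unfolding \<theta>_def by auto
  have q: "(1 - p) ^ (N - T) \<le> exp (- p * (real N - real T))"
  proof -
    have "(1 - p) ^ (N - T) \<le> exp (- p) ^ (N - T)"
      using p by (intro power_mono) (auto simp: exp_ge_add_one_self[of "-p", simplified])
    also have "\<dots> = exp (- p * real (N - T))" by (simp add: exp_of_nat_mult[symmetric] mult.commute)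
    also have "real (N - T) = real N - real T" using T by simp
    finally show ?thesis by simp
  qed
  have "bt N p T \<le> (\<Sum>i\<le>T. exp (2 * real T) * ((\<theta> * N * p) ^ i / fact i) * (1 - p) ^ (N - T))"
    unfolding bt_def
  proof (intro sum_mono)
    fix i assume i: "i \<in> {..T}"
    have "real (N choose i) * p ^ i \<le> (real N ^ i / fact i) * p ^ i"
      by (rule mult_right_mono[OF choose_le_pow_fact]) (use p in simp)
    also have "\<dots> = (N * p) ^ i / fact i" by (simp add: power_mult_distrib)
    finally have a: "real (N choose i) * p ^ i \<le> (N * p) ^ i / fact i" .
    have e: "exp (2 * real i) * \<theta> ^ i = 1"
      unfolding \<theta>_def by (simp add: exp_of_nat_mult[symmetric] exp_add[symmetric])
    have "(N * p) ^ i / fact i = exp (2 * real i) * ((\<theta> * N * p) ^ i / fact i)"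
      using e by (simp add: power_mult_distrib field_simps)
    also have "\<dots> \<le> exp (2 * real T) * ((\<theta> * N * p) ^ i / fact i)"
      using i p th by (intro mult_right_mono) auto
    finally have a2: "real (N choose i) * p ^ i \<le> exp (2 * real T) * ((\<theta> * N * p) ^ i / fact i)" using a by linarith
    have b: "(1 - p) ^ (N - i) \<le> (1 - p) ^ (N - T)"
      using i p by (intro power_decreasing) auto
    show "real (N choose i) * p ^ i * (1 - p) ^ (N - i) \<le> exp (2 * real T) * ((\<theta> * N * p) ^ i / fact i) * (1 - p) ^ (N - T)"
      by (rule mult_mono[OF a2 b]) (use p th in auto)
  qed
  also have "\<dots> = exp (2 * real T) * (1 - p) ^ (N - T) * (\<Sum>i\<le>T. (\<theta> * N * p) ^ i / fact i)"
    by (simp add: sum_distrib_left mult_ac)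
  also have "\<dots> \<le> exp (2 * real T) * exp (- p * (real N - real T)) * exp (\<theta> * N * p)"
    using q p th by (intro mult_mono exp_partial_le) (auto intro!: sum_nonneg)
  also have "\<dots> = exp (2 * real T) * exp (p * T - (1 - exp (-2)) * N * p)"
    unfolding \<theta>_def by (simp add: mult.assoc exp_add[symmetric] algebra_simps)
  finally show ?thesis .
qed

lemma bt_lower:
  assumes p: "0 \<le> p" "p \<le> 1" and j: "j \<le> N"
  shows "(real N / real j) ^ j * p ^ j * (1 - p) ^ N \<le> bt N p j"
proof -
  have "(real N / real j) ^ j * p ^ j * (1 - p) ^ N \<le> real (N choose j) * p ^ j * (1 - p) ^ (N - j)"
    using binomial_ge_n_over_k_pow_k[OF j] p
    by (intro mult_mono power_decreasing) auto
  also have "\<dots> \<le> bt N p j" unfolding bt_def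
    using p by (intro member_le_sum) auto
  finally show ?thesis .
qed


definition st :: "nat \<Rightarrow> nat set \<Rightarrow> nat set set" where
  "st u X = (\<lambda>x. {u, x}) ` X"

lemma card_st: "card (st u X) = card X"
proof -
  have "inj_on (\<lambda>x. {u, x}) X" by (rule inj_onI) (auto simp: doubleton_eq_iff)
  then show ?thesis unfolding st_def by (rule card_image)
qed

lemma st_mem: "{a, b} \<in> st u X \<longleftrightarrow> (a = u \<and> b \<in> X) \<or> (b = u \<and> a \<in> X)"
proof
  assume "{a, b} \<in> st u X"
  then obtain x where x: "x \<in> X" "{a, b} = {u, x}" unfolding st_def by blast
  then have "(a = u \<and> b = x) \<or> (a = x \<and> b = u)" by (simp add: doubleton_eq_iff)
  then show "(a = u \<and> b \<in> X) \<or> (b = u \<and> a \<in> X)" using x(1) by blast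
next
  assume "(a = u \<and> b \<in> X) \<or> (b = u \<and> a \<in> X)"
  then show "{a, b} \<in> st u X" unfolding st_def by (auto simp: insert_commute)
qed

lemma st_disj:
  assumes "u \<noteq> w" "u \<notin> Y" "w \<notin> X"
  shows "st u X \<inter> st w Y = {}"
proof (rule ccontr)
  assume "st u X \<inter> st w Y \<noteq> {}"
  then obtain x where x: "x \<in> X" "{u, x} \<in> st w Y" unfolding st_def by blast
  then have "(u = w \<and> x \<in> Y) \<or> (x = w \<and> u \<in> Y)" by (simp add: st_mem)
  then show False using assms x(1) by blast
qed

lemma finite_st: "finite X \<Longrightarrow> finite (st u X)" unfolding st_def by simp

lemma st_sub: "u < n \<Longrightarrow> X \<subseteq> {0..<n} - {u} \<Longrightarrow> st u X \<subseteq> all_edges n"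
proof
  fix e assume u: "u < n" and X: "X \<subseteq> {0..<n} - {u}" and e: "e \<in> st u X"
  then obtain x where x: "x \<in> X" "e = {u, x}" unfolding st_def by blast
  then have "x < n" "x \<noteq> u" using X by auto
  then show "e \<in> all_edges n" unfolding all_edges_mem using u x by blast
qed

lemma degree_st:
  assumes E: "E \<subseteq> all_edges n" and u: "u < n"
  shows "degree E u = card (E \<inter> st u ({0..<n} - {u}))"
proof -
  have "{e \<in> E. u \<in> e} = E \<inter> st u ({0..<n} - {u})"
  proof
    show "{e \<in> E. u \<in> e} \<subseteq> E \<inter> st u ({0..<n} - {u})"
    proof
      fix e assume e: "e \<in> {e \<in> E. u \<in> e}"
      then have "e \<in> all_edges n" using E by blast
      then obtain a b where ab: "a < n" "b < n" "a \<noteq> b" "e = {a, b}" unfolding all_edges_mem by blast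
      have "u = a \<or> u = b" using e ab by blast
      then have "e = {u, b} \<and> b \<in> {0..<n} - {u} \<or> e = {u, a} \<and> a \<in> {0..<n} - {u}"
        using ab by (auto simp: insert_commute)
      then show "e \<in> E \<inter> st u ({0..<n} - {u})" using e unfolding st_def by blast
    qed
    show "E \<inter> st u ({0..<n} - {u}) \<subseteq> {e \<in> E. u \<in> e}" unfolding st_def by blast
  qed
  then show ?thesis unfolding degree_def by simp
qed

lemma card_st_le_degree:
  assumes E: "E \<subseteq> all_edges n" and u: "u < n" and X: "X \<subseteq> {0..<n} - {u}"
  shows "card (E \<inter> st u X) \<le> degree E u"
proof -
  have "E \<inter> st u X \<subseteq> E \<inter> st u ({0..<n} - {u})" using X unfolding st_def by blast
  moreover have "finite (E \<inter> st u ({0..<n} - {u}))" by (intro finite_Int) (simp add: finite_st)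
  ultimately show ?thesis using degree_st[OF E u] card_mono by metis
qed

lemma G_cong: "(\<And>E. E \<subseteq> A \<Longrightarrow> P E = Q E) \<Longrightarrow> G p A P = G p A Q"
  unfolding G_def by (intro sum.cong) auto

lemma G_three:
  assumes A: "finite A" and sub: "G0 \<subseteq> A" "F1 \<subseteq> A" "F2 \<subseteq> A"
    and dj: "G0 \<inter> F1 = {}" "G0 \<inter> F2 = {}" "F1 \<inter> F2 = {}"
    and ne: "G0 \<noteq> {}" "F1 \<noteq> {}" "F2 \<noteq> {}"
  shows "G p A (\<lambda>E. G0 \<subseteq> E \<and> card (E \<inter> F1) \<le> T \<and> card (E \<inter> F2) \<le> T)
       = p ^ card G0 * bt (card F1) p T * bt (card F2) p T"
proof -
  define Q where "Q = (\<lambda>F X. if F = G0 then X = G0 else card X \<le> T)"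
  have d: "G0 \<noteq> F1" "G0 \<noteq> F2" "F1 \<noteq> F2" using dj ne by auto
  have fin: "finite G0" "finite F1" "finite F2" using sub A finite_subset by metis+
  have "G p A (\<lambda>E. G0 \<subseteq> E \<and> card (E \<inter> F1) \<le> T \<and> card (E \<inter> F2) \<le> T)
      = G p A (\<lambda>E. \<forall>F\<in>{G0, F1, F2}. Q F (E \<inter> F))"
    unfolding Q_def using d by (intro G_cong) auto
  also have "\<dots> = (\<Prod>F\<in>{G0, F1, F2}. G p F (Q F))"
    by (rule G_family) (use A sub dj in auto)
  also have "\<dots> = G p G0 (Q G0) * G p F1 (Q F1) * G p F2 (Q F2)" using d by simp
  also have "G p G0 (Q G0) = p ^ card G0"
  proof -
    have "G p G0 (Q G0) = G p G0 (\<lambda>E. G0 \<subseteq> E)" unfolding Q_def by (intro G_cong) auto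
    also have "\<dots> = p ^ card G0" by (rule G_subset_event) (use fin in auto)
    finally show ?thesis .
  qed
  also have "G p F1 (Q F1) = bt (card F1) p T"
    unfolding Q_def using d G_card_le[OF fin(2)] by simp
  also have "G p F2 (Q F2) = bt (card F2) p T"
    unfolding Q_def using d G_card_le[OF fin(3)] by simp
  finally show ?thesis by (simp add: mult.assoc)
qed


lemma probB1:
  assumes p: "0 \<le> p" "p \<le> 1" and n: "3 \<le> n"
  shows "G p (all_edges n) (\<lambda>E. \<exists>u<n. \<exists>v<n. u \<noteq> v \<and> {u, v} \<in> E \<and> degree E u \<le> T \<and> degree E v \<le> T)
     \<le> real n ^ 2 * (p * bt (n - 2) p T ^ 2)"
proof -
  define I where "I = {(u, v). u < n \<and> v < n \<and> u \<noteq> v}"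
  define Fu where "Fu = (\<lambda>u v. st u ({0..<n} - {u, v}))"
  define P where "P = (\<lambda>(u, v) E. {{u, v}} \<subseteq> E \<and> card (E \<inter> Fu u v) \<le> T \<and> card (E \<inter> Fu v u) \<le> T)"
  have fI: "finite I" unfolding I_def by (rule finite_subset[of _ "{0..<n} \<times> {0..<n}"]) auto
  have cI: "card I \<le> n ^ 2"
  proof -
    have "card I \<le> card ({0..<n} \<times> {0..<n})" unfolding I_def by (intro card_mono) auto
    then show ?thesis by (simp add: power2_eq_square)
  qed
  have "G p (all_edges n) (\<lambda>E. \<exists>u<n. \<exists>v<n. u \<noteq> v \<and> {u, v} \<in> E \<and> degree E u \<le> T \<and> degree E v \<le> T)
      \<le> G p (all_edges n) (\<lambda>E. \<exists>i\<in>I. P i E)"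
  proof (rule G_mono[OF p])
    fix E assume E: "E \<subseteq> all_edges n" and "\<exists>u<n. \<exists>v<n. u \<noteq> v \<and> {u, v} \<in> E \<and> degree E u \<le> T \<and> degree E v \<le> T"
    then obtain u v where uv: "u < n" "v < n" "u \<noteq> v" "{u, v} \<in> E" "degree E u \<le> T" "degree E v \<le> T" by blast
    have "card (E \<inter> Fu u v) \<le> degree E u" unfolding Fu_def using uv by (intro card_st_le_degree[OF E]) auto
    moreover have "card (E \<inter> Fu v u) \<le> degree E v" unfolding Fu_def using uv by (intro card_st_le_degree[OF E]) auto
    ultimately have "P (u, v) E" unfolding P_def using uv by auto
    moreover have "(u, v) \<in> I" unfolding I_def using uv by auto
    ultimately show "\<exists>i\<in>I. P i E" by blast
  qed
  also have "\<dots> \<le> (\<Sum>i\<in>I. G p (all_edges n) (P i))" by (rule G_union_bound[OF p fI])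
  also have "\<dots> = (\<Sum>i\<in>I. p * bt (n - 2) p T ^ 2)"
  proof (rule sum.cong[OF refl])
    fix i assume "i \<in> I"
    then obtain u v where i: "i = (u, v)" "u < n" "v < n" "u \<noteq> v" unfolding I_def by blast
    have c: "card ({0..<n} - {u, v}) = n - 2" using i by (subst card_Diff_subset) auto
    have "G p (all_edges n) (P i) = p ^ card {{u, v}} * bt (card (Fu u v)) p T * bt (card (Fu v u)) p T"
      unfolding P_def i(1) case_prod_conv
    proof (rule G_three[OF finite_all_edges])
      show "{{u, v}} \<subseteq> all_edges n" using i unfolding all_edges_def by blast
      show "Fu u v \<subseteq> all_edges n" unfolding Fu_def by (rule st_sub) (use i in auto)
      show "Fu v u \<subseteq> all_edges n" unfolding Fu_def by (rule st_sub) (use i in auto)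
      show "{{u, v}} \<inter> Fu u v = {}" unfolding Fu_def using i by (simp add: st_mem)
      show "{{u, v}} \<inter> Fu v u = {}" unfolding Fu_def using i by (simp add: st_mem)
      show "Fu u v \<inter> Fu v u = {}" unfolding Fu_def using i by (intro st_disj) auto
      show "{{u, v}} \<noteq> {}" by simp
      have "card ({0..<n} - {u, v}) \<noteq> 0" using c n by simp
      then have "{0..<n} - {u, v} \<noteq> {}" by (metis card.empty)
      then show "Fu u v \<noteq> {}" "Fu v u \<noteq> {}" unfolding Fu_def st_def by (auto simp: insert_commute)
    qed
    also have "card (Fu u v) = n - 2" using c by (simp add: Fu_def card_st)
    also have "card (Fu v u) = n - 2" using c by (simp add: Fu_def card_st insert_commute)
    also have "p ^ card {{u, v}} * bt (n - 2) p T * bt (n - 2) p T = p * bt (n - 2) p T ^ 2"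
      by (simp add: power2_eq_square)
    finally show "G p (all_edges n) (P i) = p * bt (n - 2) p T ^ 2" .
  qed
  also have "\<dots> = card I * (p * bt (n - 2) p T ^ 2)" by simp
  also have "\<dots> \<le> real n ^ 2 * (p * bt (n - 2) p T ^ 2)"
    using cI p by (intro mult_right_mono) (auto intro!: mult_nonneg_nonneg simp flip: of_nat_power)
  finally show ?thesis .
qed

lemma probB2:
  assumes p: "0 \<le> p" "p \<le> 1" and n: "4 \<le> n"
  shows "G p (all_edges n) (\<lambda>E. \<exists>w<n. \<exists>u<n. \<exists>v<n. u \<noteq> v \<and> {u, w} \<in> E \<and> {v, w} \<in> E \<and> degree E u \<le> T \<and> degree E v \<le> T)
     \<le> real n ^ 3 * (p ^ 2 * bt (n - 3) p T ^ 2)"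
proof -
  define I where "I = {(w, u, v). w < n \<and> u < n \<and> v < n \<and> u \<noteq> v \<and> u \<noteq> w \<and> v \<noteq> w}"
  define Fu where "Fu = (\<lambda>u v w. st u ({0..<n} - {u, v, w}))"
  define P where "P = (\<lambda>(w, u, v) E. {{u, w}, {v, w}} \<subseteq> E \<and> card (E \<inter> Fu u v w) \<le> T \<and> card (E \<inter> Fu v u w) \<le> T)"
  have fI: "finite I" unfolding I_def by (rule finite_subset[of _ "{0..<n} \<times> {0..<n} \<times> {0..<n}"]) auto
  have cI: "card I \<le> n ^ 3"
  proof -
    have "card I \<le> card ({0..<n} \<times> {0..<n} \<times> {0..<n})" unfolding I_def by (intro card_mono) auto
    then show ?thesis by (simp add: power3_eq_cube)
  qed
  have "G p (all_edges n) (\<lambda>E. \<exists>w<n. \<exists>u<n. \<exists>v<n. u \<noteq> v \<and> {u, w} \<in> E \<and> {v, w} \<in> E \<and> degree E u \<le> T \<and> degree E v \<le> T)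
      \<le> G p (all_edges n) (\<lambda>E. \<exists>i\<in>I. P i E)"
  proof (rule G_mono[OF p])
    fix E assume E: "E \<subseteq> all_edges n" and "\<exists>w<n. \<exists>u<n. \<exists>v<n. u \<noteq> v \<and> {u, w} \<in> E \<and> {v, w} \<in> E \<and> degree E u \<le> T \<and> degree E v \<le> T"
    then obtain w u v where uv: "w < n" "u < n" "v < n" "u \<noteq> v" "{u, w} \<in> E" "{v, w} \<in> E" "degree E u \<le> T" "degree E v \<le> T" by blast
    have "{u, w} \<in> all_edges n" "{v, w} \<in> all_edges n" using uv E by auto
    then have uw: "u \<noteq> w" "v \<noteq> w" unfolding all_edges_def by (auto simp: doubleton_eq_iff)
    have "card (E \<inter> Fu u v w) \<le> degree E u" unfolding Fu_def using uv by (intro card_st_le_degree[OF E]) auto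
    moreover have "card (E \<inter> Fu v u w) \<le> degree E v" unfolding Fu_def using uv by (intro card_st_le_degree[OF E]) auto
    ultimately have "P (w, u, v) E" unfolding P_def using uv by auto
    moreover have "(w, u, v) \<in> I" unfolding I_def using uv uw by auto
    ultimately show "\<exists>i\<in>I. P i E" by blast
  qed
  also have "\<dots> \<le> (\<Sum>i\<in>I. G p (all_edges n) (P i))" by (rule G_union_bound[OF p fI])
  also have "\<dots> = (\<Sum>i\<in>I. p ^ 2 * bt (n - 3) p T ^ 2)"
  proof (rule sum.cong[OF refl])
    fix i assume "i \<in> I"
    then obtain w u v where i: "i = (w, u, v)" "w < n" "u < n" "v < n" "u \<noteq> v" "u \<noteq> w" "v \<noteq> w" unfolding I_def by blast
    have c: "card ({0..<n} - {u, v, w}) = n - 3" using i by (subst card_Diff_subset) auto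
    have c2: "card {{u, w}, {v, w}} = 2" using i by (simp add: doubleton_eq_iff)
    have "G p (all_edges n) (P i) = p ^ card {{u, w}, {v, w}} * bt (card (Fu u v w)) p T * bt (card (Fu v u w)) p T"
      unfolding P_def i(1) case_prod_conv
    proof (rule G_three[OF finite_all_edges])
      show "{{u, w}, {v, w}} \<subseteq> all_edges n" using i unfolding all_edges_def by blast
      show "Fu u v w \<subseteq> all_edges n" unfolding Fu_def by (rule st_sub) (use i in auto)
      show "Fu v u w \<subseteq> all_edges n" unfolding Fu_def by (rule st_sub) (use i in auto)
      show "{{u, w}, {v, w}} \<inter> Fu u v w = {}" unfolding Fu_def using i by (simp add: st_mem)
      show "{{u, w}, {v, w}} \<inter> Fu v u w = {}" unfolding Fu_def using i by (simp add: st_mem)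
      show "Fu u v w \<inter> Fu v u w = {}" unfolding Fu_def using i by (intro st_disj) auto
      show "{{u, w}, {v, w}} \<noteq> {}" by simp
      have "card ({0..<n} - {u, v, w}) \<noteq> 0" using c n by simp
      then have ne: "{0..<n} - {u, v, w} \<noteq> {}" by (metis card.empty)
      then show "Fu u v w \<noteq> {}" unfolding Fu_def st_def by simp
      have "{0..<n} - {v, u, w} = {0..<n} - {u, v, w}" by auto
      then show "Fu v u w \<noteq> {}" unfolding Fu_def st_def using ne by simp
    qed
    also have "card (Fu u v w) = n - 3" using c by (simp add: Fu_def card_st)
    also have "card (Fu v u w) = n - 3"
    proof -
      have "{0..<n} - {v, u, w} = {0..<n} - {u, v, w}" by auto
      then show ?thesis using c by (simp add: Fu_def card_st)
    qed
    also have "p ^ card {{u, w}, {v, w}} * bt (n - 3) p T * bt (n - 3) p T = p ^ 2 * bt (n - 3) p T ^ 2"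
      using c2 by (simp add: power2_eq_square)
    finally show "G p (all_edges n) (P i) = p ^ 2 * bt (n - 3) p T ^ 2" .
  qed
  also have "\<dots> = card I * (p ^ 2 * bt (n - 3) p T ^ 2)" by simp
  also have "\<dots> \<le> real n ^ 3 * (p ^ 2 * bt (n - 3) p T ^ 2)"
    using cI p by (intro mult_right_mono) (auto intro!: mult_nonneg_nonneg simp flip: of_nat_power)
  finally show ?thesis .
qed


lemma probC1:
  assumes p: "0 \<le> p" "p \<le> 1" and k: "k < n"
  shows "G p (all_edges n) (\<lambda>E. \<forall>a<k. j < card (E \<inter> st a {k..<n})) = (1 - bt (n - k) p j) ^ k"
proof -
  define B where "B = {k..<n}"
  define \<F> where "\<F> = (\<lambda>a. st a B) ` {0..<k}"
  define Q where "Q = (\<lambda>(F::nat set set) (X::nat set set). j < card X)"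
  have Bne: "B \<noteq> {}" unfolding B_def using k by simp
  have inj: "inj_on (\<lambda>a. st a B) {0..<k}"
  proof (rule inj_onI)
    fix a a' assume a: "a \<in> {0..<k}" "a' \<in> {0..<k}" and eq: "st a B = st a' B"
    show "a = a'"
    proof (rule ccontr)
      assume "a \<noteq> a'"
      then have "st a B \<inter> st a' B = {}" using a unfolding B_def by (intro st_disj) auto
      moreover have "st a B \<noteq> {}" using Bne unfolding st_def by simp
      ultimately show False using eq by simp
    qed
  qed
  have "G p (all_edges n) (\<lambda>E. \<forall>a<k. j < card (E \<inter> st a {k..<n})) = G p (all_edges n) (\<lambda>E. \<forall>F\<in>\<F>. Q F (E \<inter> F))"
    unfolding \<F>_def Q_def B_def by (intro G_cong) auto
  also have "\<dots> = (\<Prod>F\<in>\<F>. G p F (Q F))"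
  proof (rule G_family)
    show "finite \<F>" unfolding \<F>_def by simp
    show "finite (all_edges n)" by (rule finite_all_edges)
    show "\<forall>F\<in>\<F>. F \<subseteq> all_edges n"
    proof
      fix F assume "F \<in> \<F>"
      then obtain a where a: "a < k" "F = st a B" unfolding \<F>_def by auto
      show "F \<subseteq> all_edges n" unfolding a(2) B_def by (rule st_sub) (use a k in auto)
    qed
    show "\<forall>F1\<in>\<F>. \<forall>F2\<in>\<F>. F1 \<noteq> F2 \<longrightarrow> F1 \<inter> F2 = {}"
    proof (intro ballI impI)
      fix F1 F2 assume F: "F1 \<in> \<F>" "F2 \<in> \<F>" "F1 \<noteq> F2"
      obtain a where a1: "a < k" "F1 = st a B" using F(1) unfolding \<F>_def by auto
      obtain a' where a2: "a' < k" "F2 = st a' B" using F(2) unfolding \<F>_def by auto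
      have a: "a < k" "a' < k" "F1 = st a B" "F2 = st a' B" "a \<noteq> a'" using a1 a2 F(3) by auto
      show "F1 \<inter> F2 = {}" unfolding a(3,4) B_def by (rule st_disj) (use a in auto)
    qed
  qed
  also have "\<dots> = (\<Prod>a\<in>{0..<k}. G p (st a B) (Q (st a B)))"
    unfolding \<F>_def using prod.reindex[OF inj, of "\<lambda>F. G p F (Q F)"] by (simp add: comp_def)
  also have "\<dots> = (\<Prod>a\<in>{0..<k}. 1 - bt (n - k) p j)"
  proof (rule prod.cong[OF refl])
    fix a
    have fin: "finite (st a B)" unfolding B_def by (simp add: finite_st)
    have "G p (st a B) (Q (st a B)) = 1 - G p (st a B) (\<lambda>X. card X \<le> j)"
      unfolding Q_def by (subst G_compl[OF fin]) (simp add: not_less)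
    also have "\<dots> = 1 - bt (n - k) p j" using G_card_le[OF fin] by (simp add: card_st B_def)
    finally show "G p (st a B) (Q (st a B)) = 1 - bt (n - k) p j" .
  qed
  finally show ?thesis by simp
qed

lemma probC2:
  assumes p: "0 \<le> p" "p \<le> 1" and k: "k \<le> n"
  shows "G p (all_edges n) (\<lambda>E. \<exists>a<k. R \<le> card (E \<inter> st a ({0..<k} - {a}))) \<le> real k * (real ((k - 1) choose R) * p ^ R)"
proof -
  define X where "X = (\<lambda>a. st a ({0..<k} - {a}))"
  define I where "I = Sigma {0..<k} (\<lambda>a. {F. F \<subseteq> X a \<and> card F = R})"
  have fX: "\<And>a. finite (X a)" unfolding X_def by (simp add: finite_st)
  have cX: "\<And>a. a < k \<Longrightarrow> card (X a) = k - 1" unfolding X_def by (simp add: card_st)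
  have fI: "finite I" unfolding I_def using fX by (intro finite_SigmaI) auto
  have cI: "card I = k * ((k - 1) choose R)"
  proof -
    have "card I = (\<Sum>a\<in>{0..<k}. card {F. F \<subseteq> X a \<and> card F = R})"
      unfolding I_def by (rule card_SigmaI) (use fX in auto)
    also have "\<dots> = (\<Sum>a\<in>{0..<k}. (k - 1) choose R)"
      by (rule sum.cong[OF refl]) (simp add: n_subsets[OF fX] cX)
    finally show ?thesis by simp
  qed
  have "G p (all_edges n) (\<lambda>E. \<exists>a<k. R \<le> card (E \<inter> st a ({0..<k} - {a})))
      \<le> G p (all_edges n) (\<lambda>E. \<exists>i\<in>I. snd i \<subseteq> E)"
  proof (rule G_mono[OF p])
    fix E assume "\<exists>a<k. R \<le> card (E \<inter> st a ({0..<k} - {a}))"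
    then obtain a where a: "a < k" "R \<le> card (E \<inter> X a)" unfolding X_def by blast
    then obtain F where F: "F \<subseteq> E \<inter> X a" "card F = R" using obtain_subset_with_card_n by metis
    then have "(a, F) \<in> I" unfolding I_def using a by auto
    then show "\<exists>i\<in>I. snd i \<subseteq> E" using F by force
  qed
  also have "\<dots> \<le> (\<Sum>i\<in>I. G p (all_edges n) (\<lambda>E. snd i \<subseteq> E))" by (rule G_union_bound[OF p fI])
  also have "\<dots> = (\<Sum>i\<in>I. p ^ R)"
  proof (rule sum.cong[OF refl])
    fix i assume "i \<in> I"
    then obtain a F where i: "i = (a, F)" "a < k" "F \<subseteq> X a" "card F = R" unfolding I_def by auto
    have "X a \<subseteq> all_edges n" unfolding X_def by (rule st_sub) (use i k in auto)
    then show "G p (all_edges n) (\<lambda>E. snd i \<subseteq> E) = p ^ R"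
      using G_subset_event[OF finite_all_edges, where F=F and p=p] i by auto
  qed
  also have "\<dots> = real k * (real ((k - 1) choose R) * p ^ R)" using cI by simp
  finally show ?thesis .
qed

lemma deg_split:
  assumes E: "E \<subseteq> all_edges n" and a: "a < k" and k: "k \<le> n"
  shows "degree E a \<le> card (E \<inter> st a {k..<n}) + card (E \<inter> st a ({0..<k} - {a}))"
proof -
  have "{0..<n} - {a} = {k..<n} \<union> ({0..<k} - {a})" using a k by auto
  then have "E \<inter> st a ({0..<n} - {a}) = (E \<inter> st a {k..<n}) \<union> (E \<inter> st a ({0..<k} - {a}))"
    unfolding st_def by auto
  then show ?thesis using degree_st[OF E, of a] a k card_Un_le by simp
qed


lemma group_by_card:
  assumes "finite V"
  shows "(\<Sum>H\<in>{H. H \<subseteq> V \<and> card H \<le> K}. f (card H)) = (\<Sum>s\<le>K. real (card V choose s) * f s)"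
proof -
  have "{H. H \<subseteq> V \<and> card H \<le> K} = (\<Union>s\<in>{..K}. {H. H \<subseteq> V \<and> card H = s})" by auto
  then have "(\<Sum>H\<in>{H. H \<subseteq> V \<and> card H \<le> K}. f (card H)) = (\<Sum>H\<in>(\<Union>s\<in>{..K}. {H. H \<subseteq> V \<and> card H = s}). f (card H))"
    by simp
  also have "\<dots> = (\<Sum>s\<le>K. \<Sum>H\<in>{H. H \<subseteq> V \<and> card H = s}. f (card H))"
    by (rule sum.UNION_disjoint) (auto simp: assms intro: finite_subset)
  also have "\<dots> = (\<Sum>s\<le>K. real (card V choose s) * f s)"
  proof (rule sum.cong[OF refl])
    fix s
    have "(\<Sum>H\<in>{H. H \<subseteq> V \<and> card H = s}. f (card H)) = (\<Sum>H\<in>{H. H \<subseteq> V \<and> card H = s}. f s)"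
      by (rule sum.cong) auto
    also have "\<dots> = real (card V choose s) * f s" using n_subsets[OF assms, of s] by simp
    finally show "(\<Sum>H\<in>{H. H \<subseteq> V \<and> card H = s}. f (card H)) = real (card V choose s) * f s" .
  qed
  finally show ?thesis .
qed

definition ed :: "nat \<Rightarrow> nat set \<Rightarrow> nat set set" where
  "ed n H = {e \<in> all_edges n. e \<subseteq> H}"

lemma card_ed:
  assumes True: "finite H"
  shows "card (ed n H) \<le> card H ^ 2"
proof -
  have "ed n H \<subseteq> (\<lambda>(a, b). {a, b}) ` (H \<times> H)"
  proof
    fix e assume "e \<in> ed n H"
    then obtain a b where "a < n" "b < n" "a \<noteq> b" "e = {a, b}" "e \<subseteq> H" unfolding ed_def all_edges_mem by blast
    then show "e \<in> (\<lambda>(a, b). {a, b}) ` (H \<times> H)" by auto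
  qed
  then have "card (ed n H) \<le> card ((\<lambda>(a, b). {a, b}) ` (H \<times> H))" using True by (intro card_mono) auto
  also have "\<dots> \<le> card (H \<times> H)" by (rule card_image_le) (use True in auto)
  finally show ?thesis by (simp add: power2_eq_square card_cartesian_product)
qed

definition hA :: "real \<Rightarrow> nat \<Rightarrow> real" where
  "hA p s = (real s ^ 2) ^ (2 * s + 1) / fact (2 * s + 1) * p ^ (2 * s + 1)"

lemma probA:
  assumes p: "0 \<le> p" "p \<le> 1"
  shows "G p (all_edges n) (\<lambda>E. \<exists>H\<subseteq>{0..<n}. real (card H) \<le> smax \<and> 2 * card H < card {e \<in> E. e \<subseteq> H})
     \<le> (\<Sum>s\<le>nat \<lfloor>smax\<rfloor>. real (n choose s) * hA p s)"
proof -
  define K where "K = nat \<lfloor>smax\<rfloor>"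
  define \<H> where "\<H> = {H. H \<subseteq> {0..<n} \<and> card H \<le> K}"
  define I where "I = Sigma \<H> (\<lambda>H. {F. F \<subseteq> ed n H \<and> card F = 2 * card H + 1})"
  have fH: "finite \<H>" unfolding \<H>_def by (rule finite_subset[of _ "Pow {0..<n}"]) auto
  have fed: "\<And>H. finite (ed n H)" unfolding ed_def using finite_all_edges by simp
  have fI: "finite I" unfolding I_def using fH fed by (intro finite_SigmaI) auto
  have "G p (all_edges n) (\<lambda>E. \<exists>H\<subseteq>{0..<n}. real (card H) \<le> smax \<and> 2 * card H < card {e \<in> E. e \<subseteq> H})
      \<le> G p (all_edges n) (\<lambda>E. \<exists>i\<in>I. snd i \<subseteq> E)"
  proof (rule G_mono[OF p])
    fix E assume E: "E \<subseteq> all_edges n" and "\<exists>H\<subseteq>{0..<n}. real (card H) \<le> smax \<and> 2 * card H < card {e \<in> E. e \<subseteq> H}"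
    then obtain H where H: "H \<subseteq> {0..<n}" "real (card H) \<le> smax" "2 * card H < card {e \<in> E. e \<subseteq> H}" by blast
    have "card H \<le> K" unfolding K_def using H(2) by linarith
    then have HH: "H \<in> \<H>" unfolding \<H>_def using H(1) by simp
    have "2 * card H + 1 \<le> card {e \<in> E. e \<subseteq> H}" using H by simp
    then obtain F where F: "F \<subseteq> {e \<in> E. e \<subseteq> H}" "card F = 2 * card H + 1" by (rule obtain_subset_with_card_n)
    have FH: "F \<subseteq> ed n H" using F(1) E unfolding ed_def by blast
    have HI: "(H, F) \<in> I" unfolding I_def using HH FH F(2) by simp
    have "F \<subseteq> E" using F(1) by blast
    then show "\<exists>i\<in>I. snd i \<subseteq> E" using HI by (intro bexI[of _ "(H, F)"]) auto
  qed
  also have "\<dots> \<le> (\<Sum>i\<in>I. G p (all_edges n) (\<lambda>E. snd i \<subseteq> E))" by (rule G_union_bound[OF p fI])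
  also have "\<dots> = (\<Sum>i\<in>I. p ^ (2 * card (fst i) + 1))"
  proof (rule sum.cong[OF refl])
    fix i assume "i \<in> I"
    then obtain H F where i: "i = (H, F)" "F \<subseteq> ed n H" "card F = 2 * card H + 1" unfolding I_def by auto
    have "F \<subseteq> all_edges n" using i unfolding ed_def by auto
    then show "G p (all_edges n) (\<lambda>E. snd i \<subseteq> E) = p ^ (2 * card (fst i) + 1)"
      using G_subset_event[OF finite_all_edges, where F=F and p=p] i by auto
  qed
  also have "\<dots> = (\<Sum>H\<in>\<H>. real (card (ed n H) choose (2 * card H + 1)) * p ^ (2 * card H + 1))"
  proof -
    have "(\<Sum>i\<in>I. p ^ (2 * card (fst i) + 1)) = (\<Sum>H\<in>\<H>. \<Sum>F\<in>{F. F \<subseteq> ed n H \<and> card F = 2 * card H + 1}. p ^ (2 * card H + 1))"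
      unfolding I_def using sum.Sigma[OF fH, of "\<lambda>H. {F. F \<subseteq> ed n H \<and> card F = 2 * card H + 1}" "\<lambda>H F. p ^ (2 * card H + 1)"] fed
      by (simp add: split_def)
    also have "\<dots> = (\<Sum>H\<in>\<H>. real (card (ed n H) choose (2 * card H + 1)) * p ^ (2 * card H + 1))"
      by (rule sum.cong[OF refl]) (simp add: n_subsets[OF fed])
    finally show ?thesis .
  qed
  also have "\<dots> \<le> (\<Sum>H\<in>\<H>. hA p (card H))"
  proof (rule sum_mono)
    fix H assume "H \<in> \<H>"
    then have fHH: "finite H" unfolding \<H>_def using finite_subset by blast
    have "real (card (ed n H) choose (2 * card H + 1)) \<le> real (card (ed n H)) ^ (2 * card H + 1) / fact (2 * card H + 1)"
      by (rule choose_le_pow_fact)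
    also have "\<dots> \<le> (real (card H) ^ 2) ^ (2 * card H + 1) / fact (2 * card H + 1)"
    proof -
      have "real (card (ed n H)) \<le> real (card H) ^ 2" using card_ed[OF fHH, of n] by (simp flip: of_nat_power)
      then show ?thesis by (intro divide_right_mono power_mono) auto
    qed
    finally show "real (card (ed n H) choose (2 * card H + 1)) * p ^ (2 * card H + 1) \<le> hA p (card H)"
      unfolding hA_def using p by (intro mult_right_mono) auto
  qed
  also have "\<dots> = (\<Sum>s\<le>K. real (n choose s) * hA p s)"
    unfolding \<H>_def using group_by_card[of "{0..<n}" "hA p" K] by simp
  finally show ?thesis unfolding K_def .
qed


lemma hA_bound_raw:
  fixes p :: real
  assumes p: "0 \<le> p" and s: "1 \<le> s" and sp: "exp 1 * s * p / 2 \<le> 1"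
  shows "real (n choose s) * ((real s ^ 2) ^ (2 * s + 1) / fact (2 * s + 1) * p ^ (2 * s + 1))
     \<le> (exp 3 * n * s * p ^ 2 / 4) ^ s"
proof -
  define m where "m = 2 * s + 1"
  have spos: "0 < real s" using s by simp
  have mpos: "0 < real m" unfolding m_def by simp
  have a1: "real (n choose s) \<le> real n ^ s / fact s" by (rule choose_le_pow_fact)
  have fs: "real s ^ s / exp (real s) \<le> fact s" by (rule fact_ge_pow_exp)
  have a2: "real n ^ s / fact s \<le> (exp 1 * n / s) ^ s"
  proof -
    have "real n ^ s / fact s \<le> real n ^ s / (real s ^ s / exp (real s))"
      using fs spos by (intro divide_left_mono) auto
    also have "\<dots> = (exp 1 * n / s) ^ s"
      by (simp add: power_divide power_mult_distrib exp_of_nat_mult[symmetric] field_simps)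
    finally show ?thesis .
  qed
  have fm: "real m ^ m / exp (real m) \<le> fact m" by (rule fact_ge_pow_exp)
  have b1: "(real s ^ 2) ^ m / fact m \<le> (exp 1 * s ^ 2 / m) ^ m"
  proof -
    have "(real s ^ 2) ^ m / fact m \<le> (real s ^ 2) ^ m / (real m ^ m / exp (real m))"
      using fm mpos by (intro divide_left_mono) auto
    also have "\<dots> = (exp 1 * s ^ 2 / m) ^ m"
      by (simp add: power_divide power_mult_distrib exp_of_nat_mult[symmetric] field_simps)
    finally show ?thesis .
  qed
  have b2: "(exp 1 * s ^ 2 / m) ^ m \<le> (exp 1 * s / 2) ^ m"
  proof (rule power_mono)
    have "real s ^ 2 / real m \<le> real s / 2" unfolding m_def using spos by (simp add: field_simps power2_eq_square)
    then show "exp 1 * s ^ 2 / m \<le> exp 1 * s / 2"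
      using mult_left_mono[of "real s ^ 2 / real m" "real s / 2" "exp 1"] by (simp add: mult.assoc)
    show "0 \<le> exp 1 * s ^ 2 / m" by simp
  qed
  have c: "(exp 1 * s / 2) ^ m * p ^ m \<le> ((exp 1 * s * p / 2) ^ 2) ^ s"
  proof -
    have "(exp 1 * s / 2) ^ m * p ^ m = (exp 1 * s * p / 2) ^ m" by (simp add: power_mult_distrib[symmetric])
    also have "\<dots> = ((exp 1 * s * p / 2) ^ 2) ^ s * (exp 1 * s * p / 2)"
      unfolding m_def by (simp add: power_mult[symmetric] power_add)
    also have "\<dots> \<le> ((exp 1 * s * p / 2) ^ 2) ^ s * 1"
      using sp p by (intro mult_left_mono) auto
    finally show ?thesis by simp
  qed
  have "real (n choose s) * ((real s ^ 2) ^ m / fact m * p ^ m) \<le> (exp 1 * n / s) ^ s * ((exp 1 * s / 2) ^ m * p ^ m)"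
  proof (rule mult_mono)
    show "real (n choose s) \<le> (exp 1 * n / s) ^ s" using a1 a2 by linarith
    show "(real s ^ 2) ^ m / fact m * p ^ m \<le> (exp 1 * s / 2) ^ m * p ^ m"
      using b1 b2 p by (intro mult_right_mono) auto
  qed (use p in auto)
  also have "\<dots> \<le> (exp 1 * n / s) ^ s * ((exp 1 * s * p / 2) ^ 2) ^ s"
    using c by (intro mult_left_mono) auto
  also have "\<dots> = (exp 1 * n / s * (exp 1 * s * p / 2) ^ 2) ^ s" by (rule power_mult_distrib[symmetric])
  also have "exp 1 * n / s * (exp 1 * s * p / 2) ^ 2 = exp 3 * n * s * p ^ 2 / 4"
  proof -
    have "exp (3::real) = exp 1 ^ 3" by (simp add: exp_of_nat_mult[symmetric])
    then show ?thesis using spos by (simp add: power2_eq_square power3_eq_cube field_simps)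
  qed
  finally show ?thesis unfolding m_def .
qed

lemma geom_bound:
  fixes a :: "nat \<Rightarrow> real"
  assumes r: "0 \<le> r" "r \<le> 1/2" and a0: "a 0 \<le> 0" and as: "\<And>s. 1 \<le> s \<Longrightarrow> s \<le> K \<Longrightarrow> a s \<le> r ^ s"
  shows "(\<Sum>s\<le>K. a s) \<le> 2 * r"
proof -
  have "(\<Sum>s\<le>K. a s) \<le> (\<Sum>s\<le>K. r ^ s) - 1"
  proof -
    have "(\<Sum>s\<le>K. a s) = a 0 + (\<Sum>s\<in>{1..K}. a s)"
      by (simp add: atMost_atLeast0 sum.atLeast_Suc_atMost)
    also have "(\<Sum>s\<in>{1..K}. a s) \<le> (\<Sum>s\<in>{1..K}. r ^ s)" using as by (intro sum_mono) auto
    also have "(\<Sum>s\<le>K. r ^ s) = 1 + (\<Sum>s\<in>{1..K}. r ^ s)"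
      by (simp add: atMost_atLeast0 sum.atLeast_Suc_atMost)
    ultimately show ?thesis using a0 by linarith
  qed
  also have "(\<Sum>s\<le>K. r ^ s) \<le> (\<Sum>s. r ^ s)"
    using r by (intro sum_le_suminf summable_geometric) auto
  also have "(\<Sum>s. r ^ s) = 1 / (1 - r)" using r by (intro suminf_geometric) auto
  finally have "(\<Sum>s\<le>K. a s) \<le> 1 / (1 - r) - 1" by simp
  also have "1 / (1 - r) - 1 = r / (1 - r)" using r by (simp add: field_simps)
  also have "\<dots> \<le> 2 * r" using r mult_left_mono[of "r*2" 1 r] by (simp add: field_simps)
  finally show ?thesis .
qed


lemma exp2_ge7: "7 \<le> exp (2::real)"
proof -
  have "(\<Sum>i\<le>4. (2::real) ^ i / fact i) \<le> exp 2" by (rule exp_partial_le) simp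
  moreover have "(\<Sum>i\<le>4. (2::real) ^ i / fact i) = 7"
    by (simp add: numeral_eq_Suc fact_Suc)
  ultimately show ?thesis by simp
qed

lemma expm2_le: "exp (-2::real) \<le> 1/7"
proof -
  have "exp (-2::real) = 1 / exp 2" by (simp add: exp_minus field_simps)
  also have "\<dots> \<le> 1/7" using exp2_ge7 by (intro divide_left_mono) auto
  finally show ?thesis .
qed

lemma btB_bound:
  fixes p L :: real and n N T :: nat
  assumes p: "0 \<le> p" "p \<le> 1" and L: "L \<le> n * p" and N: "n \<le> N + 3" and T: "T \<le> N"
    and T2: "real T \<le> n * p / 10 + 24" and pT: "p * T \<le> 1"
  shows "bt N p T \<le> exp (52 - 13/20 * L)"
proof -
  have "bt N p T \<le> exp (2 * real T) * exp (p * T - (1 - exp (-2)) * N * p)"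
    by (rule bt_upper[OF p T])
  also have "\<dots> = exp (2 * real T + p * T - (1 - exp (-2)) * N * p)" by (simp add: exp_add[symmetric])
  also have "\<dots> \<le> exp (52 - 13/20 * L)"
  proof (subst exp_le_cancel_iff)
    have A1: "(6/7) * (real N * p) \<le> (1 - exp (-2)) * real N * p"
    proof -
      have "(6/7) * (real N * p) \<le> (1 - exp (-2)) * (real N * p)"
        using expm2_le p by (intro mult_right_mono) auto
      then show ?thesis by (simp add: mult.assoc)
    qed
    have "(real n - 3) * p \<le> real N * p" using N p by (intro mult_right_mono) auto
    then have A2: "real n * p - 3 \<le> real N * p" using p by (simp add: algebra_simps)
    have A3: "0 \<le> real n * p" using p by simp
    show "2 * real T + p * T - (1 - exp (-2)) * N * p \<le> 52 - 13/20 * L"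
      using T2 pT L A1 A2 A3 by linarith
  qed
  finally show ?thesis .
qed

lemma btC_bound:
  fixes p :: real
  assumes p: "0 \<le> p" "p \<le> 1/2" and j: "j = nat \<lfloor>n * p / 10\<rfloor>" and j1: "1 \<le> j"
    and k: "real k \<le> n / 10" and jN: "j \<le> n - k" and np2: "2 * n * p ^ 2 \<le> 1"
  shows "exp (- 0.8 * n * p - 3) \<le> bt (n - k) p j"
proof -
  define N where "N = n - k"
  have kn: "k \<le> n" using k by linarith
  have RN: "real N = real n - real k" unfolding N_def using kn by simp
  have jle: "real j \<le> n * p / 10" using j by (simp add: p) linarith
  have jge: "n * p / 10 - 1 \<le> real j" using j by linarith
  have jpos: "0 < real j" using j1 by simp
  have "(real N / real j) ^ j * p ^ j * (1 - p) ^ N \<le> bt N p j"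
    by (rule bt_lower) (use p jN N_def in auto)
  moreover have "(real N / real j) ^ j * p ^ j = (real N * p / real j) ^ j"
    by (simp add: power_mult_distrib power_divide)
  moreover have "exp (2 * real j) \<le> (real N * p / real j) ^ j"
  proof -
    have "exp (2 * real j) = (exp 1 ^ 2) ^ j"
      by (simp add: exp_of_nat_mult[symmetric] power_mult[symmetric] mult.commute)
    also have "\<dots> \<le> 9 ^ j"
    proof (rule power_mono)
      have "exp 1 ^ 2 \<le> (3::real) ^ 2" using exp_le by (intro power_mono) auto
      then show "exp 1 ^ 2 \<le> (9::real)" by simp
    qed simp
    also have "\<dots> \<le> (real N * p / real j) ^ j"
    proof (rule power_mono)
      have "9 * real j \<le> 9 * (n * p / 10)" using jle by linarith
      also have "\<dots> \<le> real N * p"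
      proof -
        have "9/10 * real n \<le> real N" using RN k by linarith
        then have "9/10 * real n * p \<le> real N * p" using p by (intro mult_right_mono) auto
        then show ?thesis by simp
      qed
      finally show "9 \<le> real N * p / real j" using jpos by (simp add: field_simps)
    qed simp
    finally show ?thesis .
  qed
  moreover have "exp (- n * p - 1) \<le> (1 - p) ^ N"
  proof -
    have "- p - 2 * p ^ 2 \<le> ln (1 - p)" using p by (intro ln_one_minus_pos_lower_bound) auto
    then have "real n * (- p - 2 * p ^ 2) \<le> real n * ln (1 - p)" by (intro mult_left_mono) auto
    then have "exp (real n * (- p - 2 * p ^ 2)) \<le> exp (real n * ln (1 - p))" by simp
    also have "exp (real n * ln (1 - p)) = (1 - p) ^ n"
    proof -
      have pp: "0 < 1 - p" using p by simp
      have "exp (real n * ln (1 - p)) = exp (ln ((1 - p) ^ n))" using ln_realpow[of "1 - p" n] pp by simp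
      also have "\<dots> = (1 - p) ^ n" using pp by simp
      finally show ?thesis .
    qed
    also have "\<dots> \<le> (1 - p) ^ N" unfolding N_def using p by (intro power_decreasing) auto
    finally have "exp (real n * (- p - 2 * p ^ 2)) \<le> (1 - p) ^ N" .
    moreover have "exp (- n * p - 1) \<le> exp (real n * (- p - 2 * p ^ 2))"
      using np2 by (simp add: algebra_simps)
    ultimately show ?thesis by linarith
  qed
  ultimately have "exp (2 * real j) * exp (- n * p - 1) \<le> bt N p j"
    by (smt (verit) exp_ge_zero mult_mono zero_le_power p)
  moreover have "exp (- 0.8 * n * p - 3) \<le> exp (2 * real j) * exp (- n * p - 1)"
    unfolding exp_add[symmetric] using jge by simp
  ultimately show ?thesis unfolding N_def by linarith
qed


lemma G_or:
  assumes "0 \<le> p" "p \<le> 1"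
  shows "G p A (\<lambda>E. P E \<or> Q E) \<le> G p A P + G p A Q"
  unfolding G_def sum.distrib[symmetric] using assms
  by (intro sum_mono) (auto simp: wt_nonneg)

lemma bt_le1:
  assumes "0 \<le> p" "p \<le> 1"
  shows "bt N p j \<le> 1"
proof -
  have "bt N p j = G p {0..<N} (\<lambda>X. card X \<le> j)" using G_card_le[of "{0..<N}" p j] by simp
  also have "\<dots> \<le> G p {0..<N} (\<lambda>_. True)" by (rule G_mono) (use assms in auto)
  also have "\<dots> = 1" by (rule G_total) simp
  finally show ?thesis .
qed

lemma bt_nonneg: "0 \<le> p \<Longrightarrow> p \<le> 1 \<Longrightarrow> 0 \<le> bt N p j"
  unfolding bt_def by (intro sum_nonneg) auto

lemma det_combine:
  assumes E: "E \<subseteq> all_edges n" and kn: "k \<le> n" and T: "T = j + 24"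
    and nA: "\<not> (\<exists>H\<subseteq>{0..<n}. real (card H) \<le> smax \<and> 2 * card H < card {e \<in> E. e \<subseteq> H})"
    and nB1: "\<not> (\<exists>u<n. \<exists>v<n. u \<noteq> v \<and> {u, v} \<in> E \<and> degree E u \<le> T \<and> degree E v \<le> T)"
    and nB2: "\<not> (\<exists>w<n. \<exists>u<n. \<exists>v<n. u \<noteq> v \<and> {u, w} \<in> E \<and> {v, w} \<in> E \<and> degree E u \<le> T \<and> degree E v \<le> T)"
    and nC1: "\<not> (\<forall>a<k. j < card (E \<inter> st a {k..<n}))"
    and nC2: "\<not> (\<exists>a<k. 20 \<le> card (E \<inter> st a ({0..<k} - {a})))"
  shows "\<forall>S\<subseteq>{0..<n}. 1 \<le> card S \<and> real (card S) \<le> smax \<longrightarrow> min_degree n E * card S \<le> card (cut_edges n E S)"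
proof (intro allI impI)
  fix S assume S: "S \<subseteq> {0..<n}" and S2: "1 \<le> card S \<and> real (card S) \<le> smax"
  show "min_degree n E * card S \<le> card (cut_edges n E S)"
  proof (rule det_main[OF E _ _ _ _ S])
    show "\<forall>H\<subseteq>{0..<n}. real (card H) \<le> smax \<longrightarrow> card {e \<in> E. e \<subseteq> H} \<le> 2 * card H"
      using nA by (simp add: not_less)
    show "\<forall>u<n. \<forall>v<n. {u, v} \<in> E \<longrightarrow> degree E u \<le> T \<longrightarrow> degree E v \<le> T \<longrightarrow> False"
    proof (intro allI impI)
      fix u v assume uv: "u < n" "v < n" "{u, v} \<in> E" "degree E u \<le> T" "degree E v \<le> T"
      have "{u, v} \<in> all_edges n" using uv E by blast
      then have "u \<noteq> v" unfolding all_edges_def by (auto simp: doubleton_eq_iff)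
      then show False using nB1 uv by blast
    qed
    show "\<forall>w<n. \<forall>u<n. \<forall>v<n. u \<noteq> v \<longrightarrow> {u, w} \<in> E \<longrightarrow> {v, w} \<in> E \<longrightarrow> degree E u \<le> T \<longrightarrow> degree E v \<le> T \<longrightarrow> False"
      using nB2 by blast
    obtain a where a: "a < k" "card (E \<inter> st a {k..<n}) \<le> j" using nC1 by (auto simp: not_less)
    have a2: "card (E \<inter> st a ({0..<k} - {a})) < 20" using nC2 a(1) by (simp add: not_le)
    have "degree E a \<le> card (E \<inter> st a {k..<n}) + card (E \<inter> st a ({0..<k} - {a}))"
      by (rule deg_split[OF E a(1) kn])
    moreover have "min_degree n E \<le> degree E a" using a(1) kn by (intro min_degree_le) simp
    ultimately show "min_degree n E + 5 \<le> T" using a a2 T by linarith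
    show "real (card S) \<le> smax" using S2 by simp
  qed
qed


definition fsum :: "nat \<Rightarrow> real" where
  "fsum n = (let L = ln (real n) in
      exp 3 * (121/100) / (2 * L)
    + real n ^ 2 * (1.1 * L / n) * exp (52 - 13/20 * L) ^ 2
    + real n ^ 3 * (1.1 * L / n) ^ 2 * exp (52 - 13/20 * L) ^ 2
    + exp (- (real n powr (19/20) - 1) * exp (- (22/25) * L - 3))
    + real n powr (19/20) * (real n powr (19/20) * (1.1 * L / n)) ^ 20)"

lemma main_n:
  fixes n :: nat and p :: real
  defines "L \<equiv> ln (real n)"
  assumes h1: "L \<le> n * p" and h2: "p \<le> 1.1 * L / n"
    and n4: "4 \<le> n" and L17: "17 \<le> L"
    and c_p: "1.1 * L / n \<le> 1/2"
    and c_np2: "2 * real n * (1.1 * L / n) ^ 2 \<le> 1"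
    and c_pT: "(1.1 * L / n) * ((11/100) * L + 24) \<le> 1"
    and c_T: "(11/100) * L + 24 + n powr (19/20) \<le> real n - 3"
    and c_k: "n powr (19/20) \<le> n / 10"
  shows "1 - fsum n \<le> gnp_prob n p (\<lambda>E. \<forall>S \<subseteq> {0..<n}. 1 \<le> card S \<and> real (card S) \<le> real n / L ^ 3
                   \<longrightarrow> card (cut_edges n E S) \<ge> min_degree n E * card S)"
proof -
  define smax where "smax = real n / L ^ 3"
  define j where "j = nat \<lfloor>n * p / 10\<rfloor>"
  define T where "T = j + 24"
  define k where "k = nat \<lfloor>real n powr (19/20)\<rfloor>"
  define A where "A = all_edges n"
  define pm where "pm = 1.1 * L / n"
  have npos: "0 < real n" using n4 by simp
  have Lpos: "0 < L" using L17 by simp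
  have np13: "13 \<le> n * p" using h1 L17 by simp
  have p0: "0 \<le> p" using np13 npos by (smt (verit) mult_nonneg_nonpos of_nat_0_le_iff)
  have p12: "p \<le> 1/2" using h2 c_p by simp
  have p1: "p \<le> 1" using p12 by simp
  have npu: "n * p \<le> 1.1 * L" using h2 npos by (simp add: field_simps)
  have jle: "real j \<le> n * p / 10" unfolding j_def using p0 by simp linarith
  have jge: "n * p / 10 - 1 \<le> real j" unfolding j_def by linarith
  have j1: "1 \<le> j" unfolding j_def using np13 by linarith
  have TL: "real T \<le> (11/100) * L + 24" unfolding T_def using jle npu by simp
  have T2: "real T \<le> n * p / 10 + 24" unfolding T_def using jle by simp
  have pT: "p * T \<le> 1"
  proof -
    have "p * T \<le> pm * ((11/100) * L + 24)" unfolding pm_def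
      using h2 TL p0 by (intro mult_mono) auto
    then show ?thesis using c_pT unfolding pm_def by simp
  qed
  have pow0: "0 \<le> real n powr (19/20)" by simp
  have kle: "real k \<le> real n powr (19/20)" unfolding k_def by simp
  have kge: "real n powr (19/20) - 1 \<le> real k" unfolding k_def by linarith
  have k10: "real k \<le> n / 10" using kle c_k by simp
  have "real k < real n" using k10 npos by linarith
  then have kn: "k < n" by simp
  have "real T + 3 \<le> real n" using TL c_T pow0 by linarith
  then have "real (T + 3) \<le> real n" by simp
  then have Tn: "T + 3 \<le> n" by (simp only: of_nat_le_iff)
  have "real j + real k \<le> real n" using jle npu kle c_T Lpos by linarith
  then have "real (j + k) \<le> real n" by simp
  then have "j + k \<le> n" by (simp only: of_nat_le_iff)
  then have jk: "j \<le> n - k" by simp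
  have np2: "2 * real n * p ^ 2 \<le> 1"
  proof -
    have "p ^ 2 \<le> pm ^ 2" unfolding pm_def using p0 h2 by (intro power_mono) auto
    then have "2 * real n * p ^ 2 \<le> 2 * real n * pm ^ 2" by (intro mult_left_mono) auto
    then show ?thesis using c_np2 unfolding pm_def by simp
  qed

  define good where "good = (\<lambda>E. \<forall>S \<subseteq> {0..<n}. 1 \<le> card S \<and> real (card S) \<le> smax
                   \<longrightarrow> min_degree n E * card S \<le> card (cut_edges n E S))"
  define bA where "bA = (\<lambda>E. \<exists>H\<subseteq>{0..<n}. real (card H) \<le> smax \<and> 2 * card H < card {e \<in> E. e \<subseteq> H})"
  define bB1 where "bB1 = (\<lambda>E. \<exists>u<n. \<exists>v<n. u \<noteq> v \<and> {u, v} \<in> E \<and> degree E u \<le> T \<and> degree E v \<le> T)"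
  define bB2 where "bB2 = (\<lambda>E. \<exists>w<n. \<exists>u<n. \<exists>v<n. u \<noteq> v \<and> {u, w} \<in> E \<and> {v, w} \<in> E \<and> degree E u \<le> T \<and> degree E v \<le> T)"
  define bC1 where "bC1 = (\<lambda>E. \<forall>a<k. j < card (E \<inter> st a {k..<n}))"
  define bC2 where "bC2 = (\<lambda>E. \<exists>a<k. 20 \<le> card (E \<inter> st a ({0..<k} - {a})))"
  have un0: "G p A (\<lambda>E. \<not> good E) \<le> G p A (\<lambda>E. bA E \<or> (bB1 E \<or> (bB2 E \<or> (bC1 E \<or> bC2 E))))"
  proof (rule G_mono[OF p0 p1])
    fix E assume E: "E \<subseteq> A" and ng: "\<not> good E"
    show "bA E \<or> (bB1 E \<or> (bB2 E \<or> (bC1 E \<or> bC2 E)))"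
    proof (rule ccontr)
      assume "\<not> (bA E \<or> (bB1 E \<or> (bB2 E \<or> (bC1 E \<or> bC2 E))))"
      then have "good E" unfolding good_def
        using det_combine[of E n k T j smax] E kn T_def unfolding A_def bA_def bB1_def bB2_def bC1_def bC2_def
        by simp
      then show False using ng by simp
    qed
  qed
  moreover note un0
  moreover have "G p A (\<lambda>E. bA E \<or> (bB1 E \<or> (bB2 E \<or> (bC1 E \<or> bC2 E)))) \<le> G p A bA + G p A (\<lambda>E. bB1 E \<or> (bB2 E \<or> (bC1 E \<or> bC2 E)))"
    by (rule G_or[OF p0 p1])
  moreover have "G p A (\<lambda>E. bB1 E \<or> (bB2 E \<or> (bC1 E \<or> bC2 E))) \<le> G p A bB1 + G p A (\<lambda>E. bB2 E \<or> (bC1 E \<or> bC2 E))"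
    by (rule G_or[OF p0 p1])
  moreover have "G p A (\<lambda>E. bB2 E \<or> (bC1 E \<or> bC2 E)) \<le> G p A bB2 + G p A (\<lambda>E. bC1 E \<or> bC2 E)"
    by (rule G_or[OF p0 p1])
  moreover have "G p A (\<lambda>E. bC1 E \<or> bC2 E) \<le> G p A bC1 + G p A bC2"
    by (rule G_or[OF p0 p1])
  ultimately have un: "G p A (\<lambda>E. \<not> good E) \<le> G p A bA + G p A bB1 + G p A bB2 + G p A bC1 + G p A bC2" by linarith
  have PA: "G p A bA \<le> exp 3 * (121/100) / (2 * L)"
  proof -
    define \<rho> where "\<rho> = exp 3 * n * smax * p ^ 2 / 4"
    have smax0: "0 \<le> smax" unfolding smax_def using Lpos by simp
    have nsp: "n * smax * p ^ 2 \<le> (121/100) / L"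
    proof -
      have "p ^ 2 \<le> pm ^ 2" unfolding pm_def using p0 h2 by (intro power_mono) auto
      then have "n * smax * p ^ 2 \<le> n * smax * pm ^ 2" using smax0 by (intro mult_left_mono) auto
      also have "n * smax * pm ^ 2 = (121/100) / L"
        unfolding smax_def pm_def using npos Lpos by (simp add: field_simps power2_eq_square power3_eq_cube)
      finally show ?thesis .
    qed
    have rho_le: "\<rho> \<le> exp 3 * (121/100) / (4 * L)"
    proof -
      have "\<rho> = exp 3 * (n * smax * p ^ 2) / 4" unfolding \<rho>_def by (simp add: mult.assoc)
      also have "\<dots> \<le> exp 3 * ((121/100) / L) / 4" using nsp by (intro divide_right_mono mult_left_mono) auto
      finally show ?thesis using Lpos by (simp add: field_simps)
    qed
    have rho0: "0 \<le> \<rho>" unfolding \<rho>_def using smax0 by simp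
    have e3: "exp (3::real) \<le> 27"
    proof -
      have "exp (3::real) = exp 1 ^ 3" by (simp add: exp_of_nat_mult[symmetric])
      also have "\<dots> \<le> 3 ^ 3" using exp_le by (intro power_mono) auto
      finally show ?thesis by simp
    qed
    have rho2: "\<rho> \<le> 1/2"
    proof -
      have "exp 3 * (121/100) / (4 * L) \<le> 27 * (121/100) / (4 * L)"
        using e3 Lpos by (intro divide_right_mono mult_right_mono) auto
      also have "\<dots> \<le> 1/2" using L17 by (simp add: field_simps)
      finally show ?thesis using rho_le by simp
    qed
    have "G p A bA \<le> (\<Sum>s\<le>nat \<lfloor>smax\<rfloor>. real (n choose s) * hA p s)"
      unfolding A_def bA_def by (rule probA[OF p0 p1])
    also have "\<dots> \<le> 2 * \<rho>"
    proof (rule geom_bound[OF rho0 rho2])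
      show "real (n choose 0) * hA p 0 \<le> 0" by (simp add: hA_def)
      fix s assume s: "1 \<le> s" "s \<le> nat \<lfloor>smax\<rfloor>"
      have ss: "real s \<le> smax" using s(2) smax0 by linarith
      have esp: "exp 1 * s * p / 2 \<le> 1"
      proof -
        have "exp 1 * s * p \<le> 3 * smax * pm"
          using exp_le ss h2 p0 unfolding pm_def by (intro mult_mono) auto
        also have "3 * smax * pm = 3 * (11/10) / L ^ 2"
          unfolding smax_def pm_def using npos Lpos by (simp add: field_simps power2_eq_square power3_eq_cube)
        also have "\<dots> \<le> 2"
        proof -
          have "(17::real) * 17 \<le> L * L" using L17 by (intro mult_mono) auto
          then show ?thesis using Lpos by (simp add: field_simps power2_eq_square)
        qed
        finally show ?thesis by simp
      qed
      have "real (n choose s) * hA p s \<le> (exp 3 * n * s * p ^ 2 / 4) ^ s"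
        unfolding hA_def by (rule hA_bound_raw[OF p0 s(1) esp])
      also have "\<dots> \<le> \<rho> ^ s" unfolding \<rho>_def
        using ss by (intro power_mono divide_right_mono mult_right_mono mult_left_mono) auto
      finally show "real (n choose s) * hA p s \<le> \<rho> ^ s" .
    qed
    also have "\<dots> \<le> exp 3 * (121/100) / (2 * L)" using rho_le by (simp add: field_simps)
    finally show ?thesis .
  qed
  define X where "X = exp (52 - 13/20 * L)"
  have bt2: "bt (n - 2) p T \<le> X" unfolding X_def
    by (rule btB_bound[OF p0 p1 h1 _ _ T2 pT]) (use Tn n4 in auto)
  have bt3: "bt (n - 3) p T \<le> X" unfolding X_def
    by (rule btB_bound[OF p0 p1 h1 _ _ T2 pT]) (use Tn n4 in auto)
  have bt2sq: "bt (n - 2) p T ^ 2 \<le> X ^ 2" using bt2 bt_nonneg[OF p0 p1] by (intro power_mono) auto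
  have bt3sq: "bt (n - 3) p T ^ 2 \<le> X ^ 2" using bt3 bt_nonneg[OF p0 p1] by (intro power_mono) auto
  have PB1: "G p A bB1 \<le> real n ^ 2 * (1.1 * L / n) * exp (52 - 13/20 * L) ^ 2"
  proof -
    have "G p A bB1 \<le> real n ^ 2 * (p * bt (n - 2) p T ^ 2)"
      unfolding A_def bB1_def by (rule probB1[OF p0 p1]) (use n4 in simp)
    also have "\<dots> \<le> real n ^ 2 * (pm * X ^ 2)"
      using h2 bt2sq p0 unfolding pm_def by (intro mult_left_mono mult_mono) auto
    finally show ?thesis unfolding pm_def X_def by (simp add: mult.assoc)
  qed
  have PB2: "G p A bB2 \<le> real n ^ 3 * (1.1 * L / n) ^ 2 * exp (52 - 13/20 * L) ^ 2"
  proof -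
    have "G p A bB2 \<le> real n ^ 3 * (p ^ 2 * bt (n - 3) p T ^ 2)"
      unfolding A_def bB2_def by (rule probB2[OF p0 p1 n4])
    also have "\<dots> \<le> real n ^ 3 * (pm ^ 2 * X ^ 2)"
    proof -
      have pp: "p ^ 2 \<le> pm ^ 2" unfolding pm_def using h2 p0 by (intro power_mono) auto
      show ?thesis by (rule mult_left_mono[OF mult_mono[OF pp bt3sq]]) (use p0 in auto)
    qed
    finally show ?thesis unfolding pm_def X_def by (simp add: mult.assoc)
  qed
  have PC1: "G p A bC1 \<le> exp (- (real n powr (19/20) - 1) * exp (- (22/25) * L - 3))"
  proof -
    define b where "b = bt (n - k) p j"
    have "G p A bC1 = (1 - b) ^ k" unfolding A_def bC1_def b_def by (rule probC1[OF p0 p1 kn])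
    also have "\<dots> \<le> exp (- b) ^ k"
      using bt_le1[OF p0 p1] unfolding b_def by (intro power_mono) (auto simp: exp_ge_add_one_self[of "-_", simplified])
    also have "\<dots> = exp (- (real k * b))" by (simp add: exp_of_nat_mult[symmetric])
    also have "\<dots> \<le> exp (- (real n powr (19/20) - 1) * exp (- (22/25) * L - 3))"
    proof (subst exp_le_cancel_iff)
      have bl: "exp (- 0.8 * n * p - 3) \<le> b" unfolding b_def
        by (rule btC_bound[OF p0 p12 j_def j1 k10 jk np2])
      have "- (22/25) * L - 3 \<le> - 0.8 * n * p - 3" using npu by linarith
      then have "exp (- (22/25) * L - 3) \<le> exp (- 0.8 * n * p - 3)" by simp
      then have b2: "exp (- (22/25) * L - 3) \<le> b" using bl by linarith
      have n1: "0 \<le> real n powr (19/20) - 1"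
      proof -
        have "1 \<le> real n" using n4 by simp
        then have "1 \<le> real n powr (19/20)" by (intro ge_one_powr_ge_zero) auto
        then show ?thesis by simp
      qed
      have "(real n powr (19/20) - 1) * exp (- (22/25) * L - 3) \<le> real k * b"
        by (rule mult_mono[OF kge b2 _ _]) (use n1 in auto)
      then show "- (real k * b) \<le> - (real n powr (19/20) - 1) * exp (- (22/25) * L - 3)"
        by (simp only: mult_minus_left neg_le_iff_le)
    qed
    finally show ?thesis .
  qed
  have PC2: "G p A bC2 \<le> real n powr (19/20) * (real n powr (19/20) * (1.1 * L / n)) ^ 20"
  proof -
    have "G p A bC2 \<le> real k * (real ((k - 1) choose 20) * p ^ 20)"
      unfolding A_def bC2_def by (rule probC2[OF p0 p1]) (use kn in simp)
    also have "\<dots> \<le> real k * (real k ^ 20 * p ^ 20)"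
    proof -
      have "real ((k - 1) choose 20) \<le> real (k - 1) ^ 20 / fact 20" by (rule choose_le_pow_fact)
      also have "\<dots> \<le> real (k - 1) ^ 20" by (simp add: divide_le_eq fact_ge_1 mult_le_cancel_left1 zero_le_power)
      also have "\<dots> \<le> real k ^ 20" by (intro power_mono) auto
      finally show ?thesis using p0 by (intro mult_left_mono mult_right_mono) auto
    qed
    also have "\<dots> = real k * (real k * p) ^ 20" by (simp add: power_mult_distrib)
    also have "\<dots> \<le> real n powr (19/20) * (real n powr (19/20) * pm) ^ 20"
    proof (rule mult_mono[OF kle power_mono[OF mult_mono[OF kle]]])
      show "p \<le> pm" using h2 unfolding pm_def by simp
    qed (use p0 Lpos npos in \<open>auto simp: pm_def\<close>)
    finally show ?thesis unfolding pm_def .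
  qed
  have "gnp_prob n p good = 1 - G p A (\<lambda>E. \<not> good E)"
    unfolding gnp_prob_G A_def by (rule G_compl[OF finite_all_edges])
  moreover have "G p A (\<lambda>E. \<not> good E) \<le> fsum n"
    using un PA PB1 PB2 PC1 PC2 unfolding fsum_def Let_def L_def by linarith
  ultimately show ?thesis unfolding good_def smax_def by (simp add: L_def)
qed


lemma fsum_lim: "fsum \<longlonglongrightarrow> 0"
proof -
  have "(\<lambda>n. exp 3 * (121/100) / (2 * ln (real n))
    + real n ^ 2 * (1.1 * ln (real n) / n) * exp (52 - 13/20 * ln (real n)) ^ 2
    + real n ^ 3 * (1.1 * ln (real n) / n) ^ 2 * exp (52 - 13/20 * ln (real n)) ^ 2
    + exp (- (real n powr (19/20) - 1) * exp (- (22/25) * ln (real n) - 3))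
    + real n powr (19/20) * (real n powr (19/20) * (1.1 * ln (real n) / n)) ^ 20) \<longlonglongrightarrow> 0"
    by real_asymp
  then show ?thesis unfolding fsum_def Let_def by simp
qed

theorem lemma3p5:
  fixes p :: "nat \<Rightarrow> real"
  assumes lower: "filterlim (\<lambda>n. real n * p n - ln (real n)) at_top sequentially"
    and upper: "eventually (\<lambda>n. p n \<le> 1.1 * ln (real n) / real n) sequentially"
  shows "(\<lambda>n. gnp_prob n (p n)
            (\<lambda>E. \<forall>S \<subseteq> {0..<n}. 1 \<le> card S \<and> real (card S) \<le> real n / (ln (real n)) ^ 3
                   \<longrightarrow> card (cut_edges n E S) \<ge> min_degree n E * card S))
         \<longlonglongrightarrow> 1"
proof -
  define g where "g = (\<lambda>n. gnp_prob n (p n)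
            (\<lambda>E. \<forall>S \<subseteq> {0..<n}. 1 \<le> card S \<and> real (card S) \<le> real n / (ln (real n)) ^ 3
                   \<longrightarrow> card (cut_edges n E S) \<ge> min_degree n E * card S))"
  have ev1: "eventually (\<lambda>n. ln (real n) \<le> real n * p n) sequentially"
  proof -
    have "eventually (\<lambda>n. 0 \<le> real n * p n - ln (real n)) sequentially"
      using lower unfolding filterlim_at_top by blast
    then show ?thesis by (rule eventually_mono) simp
  qed
  have e1: "eventually (\<lambda>n::nat. 4 \<le> n) sequentially" by (rule eventually_ge_at_top)
  have e2: "eventually (\<lambda>n::nat. 17 \<le> ln (real n)) sequentially" by real_asymp
  have e3: "eventually (\<lambda>n::nat. 1.1 * ln (real n) / real n \<le> 1/2) sequentially" by real_asymp
  have e4: "eventually (\<lambda>n::nat. 2 * real n * (1.1 * ln (real n) / real n) ^ 2 \<le> 1) sequentially" by real_asymp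
  have e5: "eventually (\<lambda>n::nat. (1.1 * ln (real n) / real n) * ((11/100) * ln (real n) + 24) \<le> 1) sequentially" by real_asymp
  have e6: "eventually (\<lambda>n::nat. (11/100) * ln (real n) + 24 + real n powr (19/20) \<le> real n - 3) sequentially" by real_asymp
  have e7: "eventually (\<lambda>n::nat. real n powr (19/20) \<le> real n / 10) sequentially" by real_asymp
  have lowb: "eventually (\<lambda>n. 1 - fsum n \<le> g n) sequentially"
    using ev1 upper e1 e2 e3 e4 e5 e6 e7
  proof eventually_elim
    case (elim n)
    show ?case unfolding g_def by (rule main_n) (use elim in auto)
  qed
  have upb: "eventually (\<lambda>n. g n \<le> 1) sequentially"
    using ev1 upper e2 e3 e1
  proof eventually_elim
    case (elim n)
    have np: "0 < real n" using elim by simp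
    have "0 \<le> real n * p n" using elim by linarith
    then have p0: "0 \<le> p n" using np by (simp add: zero_le_mult_iff)
    have p1: "p n \<le> 1" using elim by linarith
    have "g n \<le> G (p n) (all_edges n) (\<lambda>_. True)"
      unfolding g_def gnp_prob_G by (rule G_mono[OF p0 p1]) simp
    also have "\<dots> = 1" by (rule G_total[OF finite_all_edges])
    finally show ?case .
  qed
  have "(\<lambda>n. 1 - fsum n) \<longlonglongrightarrow> 1 - 0" by (intro tendsto_intros fsum_lim)
  then have "(\<lambda>n. 1 - fsum n) \<longlonglongrightarrow> 1" by simp
  then have "g \<longlonglongrightarrow> 1" using lowb upb by (intro tendsto_sandwich[of "\<lambda>n. 1 - fsum n" g sequentially "\<lambda>_. 1"]) auto
  then show ?thesis unfolding g_def .
qed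


end
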